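(* Let $\alpha>-1$ and let $\varphi$ be a holomorphic self-map of $\mathbb{D}$. Then the adjoint of the composition operator $C_\varphi:A^2_\alpha(\mathbb{D})\to A^2_\alpha(\mathbb{D})$ is itself a composition operator (i.e. $C_\varphi^*=C_\psi$ for some holomorphic self-map $\psi$ of $\mathbb{D}$) if and only if $\varphi(z)=\delta z$ for some $\delta\in\mathbb{C}$ with $|\delta|\le1$.
   Context: $\mathbb{D}$ is the open unit disc and $dA$ the normalized area measure on $\mathbb{D}$. For $\alpha>-1$, the weighted Bergman space $A^2_\alpha(\mathbb{D})$ consists of holomorphic $f$ on $\mathbb{D}$ with $\|f\|^2=\int_{\mathbb{D}}|f(z)|^2(1-|z|^2)^\alpha\,dA(z)<\infty$; it is a reproducing kernel Hilbert space with kernel $\kappa_w(z)=(1-\overline{w}z)^{-(\alpha+2)}$ (up to the normalization of the measure). $C_\varphi f=f\circ\varphi$. *)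

theory Defs
  imports "HOL-Analysis.Analysis" "HOL-Complex_Analysis.Complex_Analysis"
begin

text \<open>Weighted Bergman space A^2_alpha on the unit disc, with normalized area
measure dA = (1/pi) dx dy. Functions are total on the complex plane; only
their values on the disc matter.\<close>

definition bergman_weight :: "real \<Rightarrow> complex \<Rightarrow> real" where
  "bergman_weight \<alpha> z = (1 - (norm z)\<^sup>2) powr \<alpha> / pi"

definition A2 :: "real \<Rightarrow> (complex \<Rightarrow> complex) set" where
  "A2 \<alpha> = {f. f holomorphic_on ball 0 1 \<and>
     set_integrable lborel (ball 0 1) (\<lambda>z. (norm (f z))\<^sup>2 * bergman_weight \<alpha> z)}"

definition A2_inner :: "real \<Rightarrow> (complex \<Rightarrow> complex) \<Rightarrow> (complex \<Rightarrow> complex) \<Rightarrow> complex" where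
  "A2_inner \<alpha> f g = (LINT z : ball 0 1 | lborel. f z * cnj (g z) * complex_of_real (bergman_weight \<alpha> z))"

definition self_map_disc :: "(complex \<Rightarrow> complex) \<Rightarrow> bool" where
  "self_map_disc \<phi> \<longleftrightarrow> \<phi> holomorphic_on ball 0 1 \<and> \<phi> ` ball 0 1 \<subseteq> ball 0 1"

definition comp_adjoint :: "real \<Rightarrow> (complex \<Rightarrow> complex) \<Rightarrow> (complex \<Rightarrow> complex) \<Rightarrow> bool" where
  "comp_adjoint \<alpha> \<phi> \<psi> \<longleftrightarrow>
     (\<forall>f\<in>A2 \<alpha>. \<forall>g\<in>A2 \<alpha>. A2_inner \<alpha> (f \<circ> \<phi>) g = A2_inner \<alpha> f (g \<circ> \<psi>))"

end

theory Submission
  imports Defs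
begin
lemma lborel_complex:
  "(lborel :: complex measure) = distr (lborel \<Otimes>\<^sub>M lborel) borel (\<lambda>(x,y). Complex x y)"
proof (rule lborel_eqI)
  fix l u :: complex
  assume le: "\<And>b. b \<in> Basis \<Longrightarrow> l \<bullet> b \<le> u \<bullet> b"
  have le1: "Re l \<le> Re u" "Im l \<le> Im u" using le[of 1] le[of \<i>] by (auto simp: Basis_complex_def)
  have pre: "(\<lambda>(x,y). Complex x y) -` box l u \<inter> space (lborel \<Otimes>\<^sub>M lborel) = {Re l<..<Re u} \<times> {Im l<..<Im u}"
    by (auto simp: box_def Basis_complex_def space_pair_measure)
  have m: "(\<lambda>(x,y). Complex x y) \<in> (lborel \<Otimes>\<^sub>M lborel) \<rightarrow>\<^sub>M (borel :: complex measure)"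
  proof -
    have "continuous_on UNIV (\<lambda>p::real\<times>real. Complex (fst p) (snd p))"
      by (simp add: Complex_eq continuous_intros)
    then have "(\<lambda>p::real\<times>real. Complex (fst p) (snd p)) \<in> borel_measurable borel"
      by (rule borel_measurable_continuous_onI)
    then show ?thesis
      unfolding lborel_prod measurable_lborel1 case_prod_beta' by simp
  qed
  show "emeasure (distr (lborel \<Otimes>\<^sub>M lborel) borel (\<lambda>(x,y). Complex x y)) (box l u) = (\<Prod>b\<in>Basis. (u - l) \<bullet> b)"
    using le1 by (simp add: emeasure_distr[OF m] pre lborel.emeasure_pair_measure_Times Basis_complex_def ennreal_mult)
qed simp

lemma borel_measurable_Complex[measurable (raw)]:
  fixes f g :: "'a \<Rightarrow> real"
  assumes "f \<in> borel_measurable M" "g \<in> borel_measurable M"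
  shows "(\<lambda>x. Complex (f x) (g x)) \<in> borel_measurable M"
  unfolding Complex_eq using assms by measurable

lemma meas_cont_comp:
  fixes g :: "'a::topological_space \<Rightarrow> 'b::topological_space"
  assumes "continuous_on UNIV g" "F \<in> borel_measurable borel"
  shows "(\<lambda>x. F (g x)) \<in> borel_measurable borel"
  using measurable_compose[OF borel_measurable_continuous_onI[OF assms(1)] assms(2)] by (simp add: o_def)

lemma meas_pair_lborel:
  fixes f :: "real \<times> real \<Rightarrow> 'b::topological_space"
  shows "(f \<in> borel_measurable (lborel \<Otimes>\<^sub>M lborel)) = (f \<in> borel_measurable borel)"
  by (simp add: lborel_prod)

lemma nn_integral_complex_pair:
  fixes G :: "complex \<Rightarrow> ennreal"
  assumes [measurable]: "G \<in> borel_measurable borel"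
  shows "(\<integral>\<^sup>+ z. G z \<partial>lborel) = (\<integral>\<^sup>+ p. G (Complex (fst p) (snd p)) \<partial>(lborel \<Otimes>\<^sub>M lborel))"
proof -
  have m: "(\<lambda>(x,y). Complex x y) \<in> (lborel \<Otimes>\<^sub>M lborel) \<rightarrow>\<^sub>M (borel :: complex measure)"
    unfolding meas_pair_lborel case_prod_beta'
    by (rule borel_measurable_continuous_onI) (simp add: Complex_eq continuous_intros)
  show ?thesis
    by (subst lborel_complex, subst nn_integral_distr[OF m]) (auto simp: case_prod_beta')
qed

lemma nn_integral_shear1:
  fixes F :: "complex \<Rightarrow> ennreal"
  assumes [measurable]: "F \<in> borel_measurable borel"
  shows "(\<integral>\<^sup>+ z. F (Complex (Re z + c * Im z) (Im z)) \<partial>lborel) = (\<integral>\<^sup>+ z. F z \<partial>lborel)"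
proof -
  have "(\<integral>\<^sup>+ z. F (Complex (Re z + c * Im z) (Im z)) \<partial>lborel)
      = (\<integral>\<^sup>+ p. F (Complex (fst p + c * snd p) (snd p)) \<partial>(lborel \<Otimes>\<^sub>M lborel))"
    by (subst nn_integral_complex_pair) (auto intro!: meas_cont_comp simp: Complex_eq continuous_intros)
  also have "\<dots> = (\<integral>\<^sup>+ y. \<integral>\<^sup>+ x. F (Complex (x + c * y) y) \<partial>lborel \<partial>lborel)"
    using lborel_pair.nn_integral_snd[where f="\<lambda>p. F (Complex (fst p + c * snd p) (snd p))"]
      meas_cont_comp[of "\<lambda>p. (Complex (fst p + c * snd p) (snd p))" F]
    by (simp add: meas_pair_lborel Complex_eq continuous_intros)
  also have "\<dots> = (\<integral>\<^sup>+ y. \<integral>\<^sup>+ x. F (Complex x y) \<partial>lborel \<partial>lborel)"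
  proof (rule nn_integral_cong)
    fix y :: real
    show "(\<integral>\<^sup>+ x. F (Complex (x + c * y) y) \<partial>lborel) = (\<integral>\<^sup>+ x. F (Complex x y) \<partial>lborel)"
      using nn_integral_real_affine[of "\<lambda>x. F (Complex x y)" 1 "c * y"] by (simp add: add.commute)
  qed
  also have "\<dots> = (\<integral>\<^sup>+ p. F (Complex (fst p) (snd p)) \<partial>(lborel \<Otimes>\<^sub>M lborel))"
    using lborel_pair.nn_integral_snd[where f="\<lambda>p. F (Complex (fst p) (snd p))"]
      meas_cont_comp[of "\<lambda>p. (Complex (fst p) (snd p))" F]
    by (simp add: meas_pair_lborel Complex_eq continuous_intros)
  also have "\<dots> = (\<integral>\<^sup>+ z. F z \<partial>lborel)"
    by (subst nn_integral_complex_pair) auto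
  finally show ?thesis .
qed

lemma nn_integral_shear2:
  fixes F :: "complex \<Rightarrow> ennreal"
  assumes [measurable]: "F \<in> borel_measurable borel"
  shows "(\<integral>\<^sup>+ z. F (Complex (Re z) (Im z + c * Re z)) \<partial>lborel) = (\<integral>\<^sup>+ z. F z \<partial>lborel)"
proof -
  have "(\<integral>\<^sup>+ z. F (Complex (Re z) (Im z + c * Re z)) \<partial>lborel)
      = (\<integral>\<^sup>+ p. F (Complex (fst p) (snd p + c * fst p)) \<partial>(lborel \<Otimes>\<^sub>M lborel))"
    by (subst nn_integral_complex_pair) (auto intro!: meas_cont_comp simp: Complex_eq continuous_intros)
  also have "\<dots> = (\<integral>\<^sup>+ x. \<integral>\<^sup>+ y. F (Complex x (y + c * x)) \<partial>lborel \<partial>lborel)"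
    using lborel_pair.nn_integral_snd[where f="\<lambda>p. F (Complex (fst p) (snd p + c * fst p))"] lborel_pair.Fubini[where f="\<lambda>p. F (Complex (fst p) (snd p + c * fst p))"]
      meas_cont_comp[of "\<lambda>p. (Complex (fst p) (snd p + c * fst p))" F]
    by (simp add: meas_pair_lborel Complex_eq continuous_intros)
  also have "\<dots> = (\<integral>\<^sup>+ x. \<integral>\<^sup>+ y. F (Complex x y) \<partial>lborel \<partial>lborel)"
  proof (rule nn_integral_cong)
    fix x :: real
    show "(\<integral>\<^sup>+ y. F (Complex x (y + c * x)) \<partial>lborel) = (\<integral>\<^sup>+ y. F (Complex x y) \<partial>lborel)"
      using nn_integral_real_affine[of "\<lambda>y. F (Complex x y)" 1 "c * x"] by (simp add: add.commute)
  qed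
  also have "\<dots> = (\<integral>\<^sup>+ p. F (Complex (fst p) (snd p)) \<partial>(lborel \<Otimes>\<^sub>M lborel))"
    using lborel_pair.nn_integral_snd[where f="\<lambda>p. F (Complex (fst p) (snd p))"] lborel_pair.Fubini[where f="\<lambda>p. F (Complex (fst p) (snd p))"]
      meas_cont_comp[of "\<lambda>p. (Complex (fst p) (snd p))" F]
    by (simp add: meas_pair_lborel Complex_eq continuous_intros)
  also have "\<dots> = (\<integral>\<^sup>+ z. F z \<partial>lborel)"
    by (subst nn_integral_complex_pair) auto
  finally show ?thesis .
qed

lemma rot_shear_identity:
  fixes u z :: complex
  assumes "norm u = 1" "u \<noteq> -1"
  defines "a \<equiv> - Im u / (1 + Re u)" and "b \<equiv> Im u"
  shows "u * z = (let w1 = Complex (Re z + a * Im z) (Im z);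
                      w2 = Complex (Re w1) (Im w1 + b * Re w1) in
                  Complex (Re w2 + a * Im w2) (Im w2))"
proof -
  have n: "(Re u)^2 + (Im u)^2 = 1" using assms(1) by (simp add: cmod_def)
  have p: "1 + Re u \<noteq> 0"
  proof
    assume "1 + Re u = 0"
    then have "Re u = -1" by simp
    with n have "Im u = 0" by simp
    with \<open>Re u = -1\<close> have "u = -1" by (simp add: complex_eq_iff)
    with assms show False by simp
  qed
  have q2: "(Im u)^2 = 1 - (Re u)^2" using n by simp
  have e1: "1 + a * b = Re u"
    unfolding a_def b_def using p by (simp add: field_simps power2_eq_square q2[unfolded power2_eq_square])
  have ap: "a * (1 + Re u) = - Im u" unfolding a_def using p by simp
  have e2: "2 * a + a * a * b = - Im u"
  proof -
    have "(2 * a + a * a * b) * (1 + Re u)^2 = 2 * (a * (1 + Re u)) * (1 + Re u) + b * (a * (1 + Re u))^2"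
      by (simp add: power2_eq_square algebra_simps)
    also have "\<dots> = Im u * ((Im u)^2 - 2 - 2 * Re u)" unfolding ap b_def by (simp add: power2_eq_square algebra_simps)
    also have "\<dots> = (- Im u) * (1 + Re u)^2" unfolding q2 by (simp add: power2_eq_square algebra_simps)
    finally have "(2 * a + a * a * b) * (1 + Re u)^2 = (- Im u) * (1 + Re u)^2" .
    then show ?thesis using p by (metis mult_right_cancel power_not_zero)
  qed
  show ?thesis
  proof (simp add: Let_def complex_eq_iff, intro conjI)
    show "Re u * Re z - Im u * Im z = Re z + a * Im z + a * (Im z + b * (Re z + a * Im z))"
    proof -
      have "Re z + a * Im z + a * (Im z + b * (Re z + a * Im z)) = Re z * (1 + a * b) + Im z * (2 * a + a * a * b)"
        by (simp add: algebra_simps)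
      then show ?thesis unfolding e1 e2 by simp
    qed
    show "Re u * Im z + Im u * Re z = Im z + b * (Re z + a * Im z)"
    proof -
      have "Im z + b * (Re z + a * Im z) = Im z * (1 + a * b) + b * Re z"
        by (simp add: algebra_simps)
      then show ?thesis using e1[unfolded b_def] by (simp add: b_def)
    qed
  qed
qed

lemma nn_integral_rot_aux:
  fixes F :: "complex \<Rightarrow> ennreal" and u :: complex
  assumes F[measurable]: "F \<in> borel_measurable borel" and u: "norm u = 1" "u \<noteq> -1"
  shows "(\<integral>\<^sup>+ z. F (u * z) \<partial>lborel) = (\<integral>\<^sup>+ z. F z \<partial>lborel)"
proof -
  define a where "a = - Im u / (1 + Re u)"
  define b where "b = Im u"
  define S1 where "S1 = (\<lambda>z. Complex (Re z + a * Im z) (Im z))"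
  define S2 where "S2 = (\<lambda>z. Complex (Re z) (Im z + b * Re z))"
  have c1: "continuous_on UNIV S1" unfolding S1_def by (simp add: Complex_eq continuous_intros)
  have c2: "continuous_on UNIV S2" unfolding S2_def by (simp add: Complex_eq continuous_intros)
  have eq: "u * z = S1 (S2 (S1 z))" for z
    using rot_shear_identity[OF u, of z] unfolding S1_def S2_def a_def b_def Let_def by simp
  have m1: "(\<lambda>w. F (S1 (S2 w))) \<in> borel_measurable borel"
    by (rule meas_cont_comp[OF _ F]) (intro continuous_on_compose2[OF c1 continuous_on_compose2[OF c2]] continuous_on_id; simp)
  have m2: "(\<lambda>w. F (S1 w)) \<in> borel_measurable borel"
    by (rule meas_cont_comp[OF c1 F])
  have "(\<integral>\<^sup>+ z. F (u * z) \<partial>lborel) = (\<integral>\<^sup>+ z. (\<lambda>w. F (S1 (S2 w))) (S1 z) \<partial>lborel)"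
    by (simp add: eq)
  also have "\<dots> = (\<integral>\<^sup>+ z. F (S1 (S2 z)) \<partial>lborel)"
    using nn_integral_shear1[OF m1, of a] unfolding S1_def by simp
  also have "\<dots> = (\<integral>\<^sup>+ z. F (S1 z) \<partial>lborel)"
    using nn_integral_shear2[OF m2, of b] unfolding S2_def by simp
  also have "\<dots> = (\<integral>\<^sup>+ z. F z \<partial>lborel)"
    using nn_integral_shear1[OF F, of a] unfolding S1_def by simp
  finally show ?thesis .
qed

lemma nn_integral_rot:
  fixes F :: "complex \<Rightarrow> ennreal" and u :: complex
  assumes F[measurable]: "F \<in> borel_measurable borel" and u: "norm u = 1"
  shows "(\<integral>\<^sup>+ z. F (u * z) \<partial>lborel) = (\<integral>\<^sup>+ z. F z \<partial>lborel)"
proof (cases "u = -1")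
  case True
  have mi: "(\<lambda>z. F (\<i> * z)) \<in> borel_measurable borel"
    by (rule meas_cont_comp[OF _ F]) (simp add: continuous_intros)
  have "(\<integral>\<^sup>+ z. F (u * z) \<partial>lborel) = (\<integral>\<^sup>+ z. (\<lambda>w. F (\<i> * w)) (\<i> * z) \<partial>lborel)"
    using True by (simp add: mult.assoc[symmetric])
  also have "\<dots> = (\<integral>\<^sup>+ z. F (\<i> * z) \<partial>lborel)"
    by (rule nn_integral_rot_aux[OF mi]) (auto simp: complex_eq_iff)
  also have "\<dots> = (\<integral>\<^sup>+ z. F z \<partial>lborel)"
    by (rule nn_integral_rot_aux[OF F]) (auto simp: complex_eq_iff)
  finally show ?thesis .
qed (rule nn_integral_rot_aux[OF F u])

lemma distr_rot:
  assumes u: "norm u = 1"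
  shows "distr lborel borel (\<lambda>z. u * z) = (lborel :: complex measure)"
proof (rule measure_eqI)
  fix A :: "complex set" assume A: "A \<in> sets (distr lborel borel (\<lambda>z. u * z))"
  then have A': "A \<in> sets borel" by simp
  have m: "(\<lambda>z. u * z) \<in> lborel \<rightarrow>\<^sub>M borel" by simp
  have "emeasure (distr lborel borel (\<lambda>z. u * z)) A = emeasure lborel ((\<lambda>z. u * z) -` A)"
    using A' by (simp add: emeasure_distr[OF m])
  also have "\<dots> = (\<integral>\<^sup>+ z. indicator A (u * z) \<partial>lborel)"
  proof -
    have mu: "(\<lambda>z. u * z) \<in> borel_measurable borel"
      by (rule borel_measurable_continuous_onI) (simp add: continuous_intros)
    have B: "(\<lambda>z. u * z) -` A \<in> sets lborel" using measurable_sets_borel[OF mu A'] by simp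
    show ?thesis using nn_integral_indicator[OF B, symmetric] by (simp add: indicator_def)
  qed
  also have "\<dots> = (\<integral>\<^sup>+ z. indicator A z \<partial>lborel)"
    using A' by (intro nn_integral_rot u) simp
  also have "\<dots> = emeasure lborel A" using A' by simp
  finally show "emeasure (distr lborel borel (\<lambda>z. u * z)) A = emeasure lborel A" .
qed simp

lemma integrable_rot1:
  fixes f :: "complex \<Rightarrow> 'b::{banach, second_countable_topology}"
  assumes u: "norm u = 1" and f: "integrable lborel f"
  shows "integrable lborel (\<lambda>z. f (u * z))"
proof -
  have fm: "f \<in> borel_measurable borel" using borel_measurable_integrable[OF f] by simp
  show ?thesis
    using integrable_distr_eq[of "\<lambda>z. u * z" lborel borel f] distr_rot[OF u] fm f by simp
qed

lemma integrable_rot: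
  fixes f :: "complex \<Rightarrow> 'b::{banach, second_countable_topology}"
  assumes u: "norm u = 1"
  shows "integrable lborel (\<lambda>z. f (u * z)) \<longleftrightarrow> integrable lborel f"
proof
  assume "integrable lborel (\<lambda>z. f (u * z))"
  from integrable_rot1[OF _ this, of "cnj u"] u
  have "integrable lborel (\<lambda>z. f (u * (cnj u * z)))" by simp
  moreover have "u * (cnj u * z) = z" for z
  proof -
    have "u * cnj u = 1" using complex_norm_square[of u] u by simp
    then show ?thesis by (simp add: mult.assoc[symmetric])
  qed
  ultimately show "integrable lborel f" by simp
qed (rule integrable_rot1[OF u])

lemma integral_rot:
  fixes f :: "complex \<Rightarrow> 'b::{banach, second_countable_topology}"
  assumes u: "norm u = 1" and f: "integrable lborel f"
  shows "integral\<^sup>L lborel (\<lambda>z. f (u * z)) = integral\<^sup>L lborel f"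
proof -
  have fm: "f \<in> borel_measurable borel" using borel_measurable_integrable[OF f] by simp
  show ?thesis
    using integral_distr[of "\<lambda>z. u * z" lborel borel f] distr_rot[OF u] fm by simp
qed

lemma meas_pair_lborel2:
  fixes f :: "'a::euclidean_space \<times> 'b::euclidean_space \<Rightarrow> 'c::topological_space"
  shows "(f \<in> borel_measurable (lborel \<Otimes>\<^sub>M lborel)) = (f \<in> borel_measurable borel)"
  by (simp add: lborel_prod)

lemma cont_rotmap: "continuous_on UNIV (\<lambda>p::real \<times> complex. cis (2 * pi * fst p) * snd p)"
  by (simp add: cis_conv_exp continuous_intros)

lemma norm_cis_mult[simp]: "norm (cis a * z) = norm z"
  by (simp add: norm_mult)

lemma meas_fst_borel: "(fst :: real \<times> complex \<Rightarrow> real) \<in> borel_measurable borel"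
  by (rule borel_measurable_continuous_onI) (simp add: continuous_on_fst continuous_on_id)

lemma meas_ind_fst_ennreal: "(\<lambda>p::real \<times> complex. indicator {0..1} (fst p) :: ennreal) \<in> borel_measurable borel"
  using measurable_compose[OF meas_fst_borel borel_measurable_indicator[of "{0..1::real}" borel]] by (simp add: o_def)

lemma meas_ind_fst_real: "(\<lambda>p::real \<times> complex. indicator {0..1} (fst p) :: real) \<in> borel_measurable borel"
  using measurable_compose[OF meas_fst_borel borel_measurable_indicator[of "{0..1::real}" borel]] by (simp add: o_def)

lemma nn_integral_avg:
  fixes F :: "complex \<Rightarrow> ennreal"
  assumes F[measurable]: "F \<in> borel_measurable borel"
  shows "(\<integral>\<^sup>+ z. F z \<partial>lborel) =
         (\<integral>\<^sup>+ z. (\<integral>\<^sup>+ t. indicator {0..1} t * F (cis (2 * pi * t) * z) \<partial>lborel) \<partial>lborel)"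
proof -
  define K where "K = (\<lambda>p::real \<times> complex. indicator {0..1} (fst p) * F (cis (2 * pi * fst p) * snd p))"
  have Km: "K \<in> borel_measurable (lborel \<Otimes>\<^sub>M lborel)"
  proof -
    have "(\<lambda>p::real \<times> complex. F (cis (2 * pi * fst p) * snd p)) \<in> borel_measurable borel"
      by (rule meas_cont_comp[OF cont_rotmap F])
    moreover note meas_ind_fst_ennreal
    ultimately show ?thesis unfolding K_def meas_pair_lborel2 by measurable
  qed
  have "(\<integral>\<^sup>+ z. (\<integral>\<^sup>+ t. indicator {0..1} t * F (cis (2 * pi * t) * z) \<partial>lborel) \<partial>lborel)
      = (\<integral>\<^sup>+ t. (\<integral>\<^sup>+ z. indicator {0..1} t * F (cis (2 * pi * t) * z) \<partial>lborel) \<partial>lborel)"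
    using lborel_pair.Fubini[OF Km] unfolding K_def by simp
  also have "\<dots> = (\<integral>\<^sup>+ t. indicator {0..1::real} t * (\<integral>\<^sup>+ z. F z \<partial>lborel) \<partial>lborel)"
    by (intro nn_integral_cong) (simp add: nn_integral_cmult nn_integral_rot)
  also have "\<dots> = (\<integral>\<^sup>+ z. F z \<partial>lborel)"
    by (simp add: nn_integral_multc)
  finally show ?thesis ..
qed

lemma integral_avg:
  fixes G :: "complex \<Rightarrow> complex"
  assumes G: "integrable lborel G"
  shows "integral\<^sup>L lborel G =
         (\<integral> z. (\<integral> t. indicator {0..1} t *\<^sub>R G (cis (2 * pi * t) * z) \<partial>lborel) \<partial>lborel)"
proof -
  have Gm[measurable]: "G \<in> borel_measurable borel" using borel_measurable_integrable[OF G] by simp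
  define K where "K = (\<lambda>t z. indicator {0..1} t *\<^sub>R G (cis (2 * pi * t) * z))"
  have Km: "case_prod K \<in> borel_measurable (lborel \<Otimes>\<^sub>M lborel)"
  proof -
    have "(\<lambda>p::real \<times> complex. G (cis (2 * pi * fst p) * snd p)) \<in> borel_measurable borel"
      by (rule meas_cont_comp[OF cont_rotmap Gm])
    moreover note meas_ind_fst_real
    ultimately show ?thesis unfolding K_def meas_pair_lborel2 case_prod_beta' by measurable
  qed
  have Ki: "integrable (lborel \<Otimes>\<^sub>M lborel) (case_prod K)"
  proof (rule integrableI_bounded)
    show "case_prod K \<in> borel_measurable (lborel \<Otimes>\<^sub>M lborel)" by (rule Km)
    have nm: "(\<lambda>p. ennreal (norm (case_prod K p))) \<in> borel_measurable (lborel \<Otimes>\<^sub>M lborel)"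
      using Km by measurable
    have "(\<integral>\<^sup>+ p. ennreal (norm (case_prod K p)) \<partial>(lborel \<Otimes>\<^sub>M lborel))
        = (\<integral>\<^sup>+ t. (\<integral>\<^sup>+ z. ennreal (norm (K t z)) \<partial>lborel) \<partial>lborel)"
      using lborel_pair.Fubini[OF nm] lborel_pair.nn_integral_snd[OF nm] by simp
    also have "\<dots> = (\<integral>\<^sup>+ t. indicator {0..1::real} t * (\<integral>\<^sup>+ z. ennreal (norm (G z)) \<partial>lborel) \<partial>lborel)"
    proof (intro nn_integral_cong)
      fix t :: real
      have "(\<integral>\<^sup>+ z. ennreal (norm (K t z)) \<partial>lborel)
          = (\<integral>\<^sup>+ z. indicator {0..1} t * ennreal (norm (G (cis (2 * pi * t) * z))) \<partial>lborel)"
        unfolding K_def by (intro nn_integral_cong) (simp add: indicator_def)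
      also have "\<dots> = indicator {0..1} t * (\<integral>\<^sup>+ z. ennreal (norm (G z)) \<partial>lborel)"
      proof -
        have Gnm: "(\<lambda>z. ennreal (norm (G z))) \<in> borel_measurable borel" by measurable
        show ?thesis by (simp add: nn_integral_cmult nn_integral_rot[OF Gnm])
      qed
      finally show "(\<integral>\<^sup>+ z. ennreal (norm (K t z)) \<partial>lborel) = indicator {0..1} t * (\<integral>\<^sup>+ z. ennreal (norm (G z)) \<partial>lborel)" .
    qed
    also have "\<dots> = (\<integral>\<^sup>+ z. ennreal (norm (G z)) \<partial>lborel)"
      by (simp add: nn_integral_multc)
    also have "\<dots> < \<infinity>" using G by (simp add: integrable_iff_bounded)
    finally show "(\<integral>\<^sup>+ p. ennreal (norm (case_prod K p)) \<partial>(lborel \<Otimes>\<^sub>M lborel)) < \<infinity>" .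
  qed
  have "(\<integral> z. (\<integral> t. K t z \<partial>lborel) \<partial>lborel) = (\<integral> t. (\<integral> z. K t z \<partial>lborel) \<partial>lborel)"
    by (rule lborel_pair.Fubini_integral[OF Ki])
  also have "\<dots> = (\<integral> t. indicator {0..1::real} t *\<^sub>R integral\<^sup>L lborel G \<partial>lborel)"
    unfolding K_def by (intro Bochner_Integration.integral_cong refl) (simp add: integral_rot[OF _ G])
  also have "\<dots> = integral\<^sup>L lborel G"
    by simp
  finally show ?thesis unfolding K_def ..
qed

definition circ_avg :: "(real \<Rightarrow> complex) \<Rightarrow> complex" where
  "circ_avg f = (LINT t:{0..1}|lborel. f t)"

lemma circ_avg_alt: "circ_avg f = (\<integral> t. indicator {0..1} t *\<^sub>R f t \<partial>lborel)"
  by (simp add: circ_avg_def set_lebesgue_integral_def)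

lemma circ_avg_cont_integrable:
  fixes f :: "real \<Rightarrow> complex"
  assumes "continuous_on {0..1} f"
  shows "set_integrable lborel {0..1::real} f"
  unfolding set_integrable_def by (rule borel_integrable_compact[OF compact_Icc assms])

lemma circ_avg_eq_integral:
  fixes f :: "real \<Rightarrow> complex"
  assumes "continuous_on {0..1} f"
  shows "circ_avg f = integral {0..1} f"
  unfolding circ_avg_def by (rule set_borel_integral_eq_integral(2)[OF circ_avg_cont_integrable[OF assms]])

lemma cis_pow_cnj: "cis (2 * pi * t) ^ k * cnj (cis (2 * pi * t)) ^ m = cis (2 * pi * (real k - real m) * t)"
  unfolding cis_cnj Complex.DeMoivre cis_mult by (simp add: algebra_simps)

lemma circ_avg_exp:
  "circ_avg (\<lambda>t. cis (2 * pi * t) ^ k * cnj (cis (2 * pi * t)) ^ m) = (if k = m then 1 else 0)"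
proof -
  have cont: "continuous_on {0..1} (\<lambda>t. cis (2 * pi * (real k - real m) * t))"
    by (intro continuous_intros)
  have "circ_avg (\<lambda>t. cis (2 * pi * t) ^ k * cnj (cis (2 * pi * t)) ^ m)
      = integral {0..1} (\<lambda>t. cis (2 * pi * (real k - real m) * t))"
    unfolding cis_pow_cnj by (rule circ_avg_eq_integral[OF cont])
  also have "\<dots> = (if k = m then 1 else 0)"
  proof (cases "k = m")
    case True
    then show ?thesis by simp
  next
    case False
    define c where "c = 2 * pi * (real k - real m)"
    have c0: "c \<noteq> 0" using False unfolding c_def by simp
    define F where "F = (\<lambda>t. cis (c * t) / (\<i> * complex_of_real c))"
    have der: "(F has_vector_derivative cis (c * t)) (at t within {0..1})" for t
    proof -
      have "((\<lambda>t. cis (c * t)) has_derivative (\<lambda>h. (c * h) *\<^sub>R (\<i> * cis (c * t)))) (at t within {0..1})"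
        by (intro derivative_eq_intros) auto
      then have "((\<lambda>t. cis (c * t)) has_vector_derivative (c *\<^sub>R (\<i> * cis (c * t)))) (at t within {0..1})"
        by (simp add: has_vector_derivative_def scaleR_scaleR mult.commute)
      then have "(F has_vector_derivative (c *\<^sub>R (\<i> * cis (c * t))) / (\<i> * complex_of_real c)) (at t within {0..1})"
        unfolding F_def by (rule has_vector_derivative_divide)
      moreover have "(c *\<^sub>R (\<i> * cis (c * t))) / (\<i> * complex_of_real c) = cis (c * t)"
        using c0 by (simp add: scaleR_conv_of_real field_simps)
      ultimately show ?thesis by simp
    qed
    have "((\<lambda>t. cis (c * t)) has_integral (F 1 - F 0)) {0..1}"
      by (rule fundamental_theorem_of_calculus) (auto intro: der)
    moreover have "F 1 - F 0 = 0"
    proof -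
      have "cis c = 1" unfolding c_def
        using cis_multiple_2pi[of "real k - real m"] by (simp add: Ints_diff)
      then show ?thesis unfolding F_def by simp
    qed
    ultimately show ?thesis using False unfolding c_def by (simp add: integral_unique mult.assoc)
  qed
  finally show ?thesis .
qed

lemma powser_summable_norm_ball:
  fixes a :: "nat \<Rightarrow> complex"
  assumes sums: "\<And>w. w \<in> ball 0 1 \<Longrightarrow> (\<lambda>n. a n * w^n) sums F w"
    and z: "z \<in> ball 0 1"
  shows "summable (\<lambda>n. norm (a n * z^n))"
proof -
  define \<rho> where "\<rho> = (1 + norm z) / 2"
  have nz: "norm z < 1" using z by simp
  have r0: "\<rho> \<ge> 0" unfolding \<rho>_def using norm_ge_zero[of z] by simp
  have nr: "norm (complex_of_real \<rho>) = \<rho>" using r0 by simp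
  have r1: "complex_of_real \<rho> \<in> ball 0 1" using nz nr unfolding \<rho>_def by simp
  have "summable (\<lambda>n. a n * (complex_of_real \<rho>)^n)" using sums[OF r1] by (rule sums_summable)
  moreover have "norm z < norm (complex_of_real \<rho>)" using nz nr unfolding \<rho>_def by simp
  ultimately show ?thesis by (rule powser_insidea)
qed

lemma circ_series:
  fixes a :: "nat \<Rightarrow> complex" and F :: "complex \<Rightarrow> complex" and \<phi> :: "real \<Rightarrow> complex"
  assumes sums: "\<And>w. w \<in> ball 0 1 \<Longrightarrow> (\<lambda>n. a n * w^n) sums F w"
    and z: "z \<in> ball 0 1" and \<phi>: "continuous_on {0..1} \<phi>"
  shows "(\<lambda>n. a n * z^n * circ_avg (\<lambda>t. cis (2*pi*t)^n * \<phi> t)) sums circ_avg (\<lambda>t. F (cis (2*pi*t) * z) * \<phi> t)"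
proof -
  have summ: "summable (\<lambda>n. norm (a n * z^n))" by (rule powser_summable_norm_ball[OF sums z])
  define f where "f n t = indicator {0..1} t *\<^sub>R (a n * (cis (2*pi*t) * z)^n * \<phi> t)" for n t
  have int: "integrable lborel (f n)" for n
    unfolding f_def by (rule borel_integrable_compact[OF compact_Icc]) (intro continuous_intros \<phi>)
  have normf: "norm (f n t) = norm (a n * z^n) * (indicator {0..1} t * norm (\<phi> t))" for n t
    unfolding f_def by (simp add: norm_mult norm_power indicator_def)
  have intphi: "integrable lborel (\<lambda>t. indicator {0..1} t * norm (\<phi> t))"
    using borel_integrable_compact[OF compact_Icc, of 0 1 "\<lambda>t. norm (\<phi> t)"] \<phi>
    by (simp add: continuous_on_norm)
  have s1: "AE t in lborel. summable (\<lambda>n. norm (f n t))"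
    unfolding normf by (intro AE_I2 summable_mult2 summ)
  have s2: "summable (\<lambda>n. \<integral>t. norm (f n t) \<partial>lborel)"
    unfolding normf by (simp add: summable_mult2 summ)
  have "(\<lambda>n. integral\<^sup>L lborel (f n)) sums (\<integral>t. (\<Sum>n. f n t) \<partial>lborel)"
    by (rule sums_integral[OF int s1 s2])
  moreover have "integral\<^sup>L lborel (f n) = a n * z^n * circ_avg (\<lambda>t. cis (2*pi*t)^n * \<phi> t)" for n
  proof -
    have "f n = (\<lambda>t. (a n * z^n) * (indicator {0..1} t *\<^sub>R (cis (2*pi*t)^n * \<phi> t)))"
      unfolding f_def by (auto simp: indicator_def power_mult_distrib)
    then show ?thesis unfolding circ_avg_alt by (simp only: integral_mult_right_zero)
  qed
  moreover have "(\<Sum>n. f n t) = indicator {0..1} t *\<^sub>R (F (cis (2*pi*t) * z) * \<phi> t)" for t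
  proof (cases "t \<in> {0..1}")
    case True
    have w: "cis (2*pi*t) * z \<in> ball 0 1" using z by simp
    have "(\<lambda>n. a n * (cis (2*pi*t) * z)^n * \<phi> t) sums (F (cis (2*pi*t) * z) * \<phi> t)"
      by (rule sums_mult2[OF sums[OF w]])
    then show ?thesis using True unfolding f_def by (simp add: sums_iff)
  next
    case False
    then show ?thesis unfolding f_def by simp
  qed
  ultimately show ?thesis unfolding circ_avg_alt by simp
qed

lemma circ_coeff:
  fixes a :: "nat \<Rightarrow> complex" and F :: "complex \<Rightarrow> complex"
  assumes sums: "\<And>w. w \<in> ball 0 1 \<Longrightarrow> (\<lambda>n. a n * w^n) sums F w"
    and z: "z \<in> ball 0 1"
  shows "circ_avg (\<lambda>t. F (cis (2*pi*t) * z) * cnj (cis (2*pi*t)) ^ m) = a m * z^m"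
proof -
  have "(\<lambda>n. a n * z^n * circ_avg (\<lambda>t. cis (2*pi*t)^n * cnj (cis (2*pi*t)) ^ m)) sums
          circ_avg (\<lambda>t. F (cis (2*pi*t) * z) * cnj (cis (2*pi*t)) ^ m)"
  proof -
    have c: "continuous_on {0..1} (\<lambda>t. cnj (cis (2*pi*t)) ^ m)"
      by (intro continuous_intros)
    show ?thesis by (rule circ_series[OF sums z c])
  qed
  note calc = this
  have "(\<lambda>n. if n = m then a m * z^m else 0) sums circ_avg (\<lambda>t. F (cis (2*pi*t) * z) * cnj (cis (2*pi*t)) ^ m)"
  proof -
    have "(\<lambda>n. a n * z^n * (if n = m then 1 else 0)) = (\<lambda>n. if n = m then a m * z^m else 0)"
      by (auto simp: fun_eq_iff)
    then show "?thesis" using calc unfolding circ_avg_exp by simp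
  qed
  moreover have "(\<lambda>n. if n = m then a m * z^m else 0) sums (a m * z^m)"
    by (rule sums_single)
  ultimately show ?thesis using sums_unique2 by blast
qed

lemma circ_parseval:
  fixes a b :: "nat \<Rightarrow> complex" and F G :: "complex \<Rightarrow> complex"
  assumes sa: "\<And>w. w \<in> ball 0 1 \<Longrightarrow> (\<lambda>n. a n * w^n) sums F w"
    and sb: "\<And>w. w \<in> ball 0 1 \<Longrightarrow> (\<lambda>n. b n * w^n) sums G w"
    and Gc: "continuous_on (ball 0 1) G"
    and z: "z \<in> ball 0 1"
  shows "(\<lambda>n. a n * cnj (b n) * (z * cnj z)^n) sums circ_avg (\<lambda>t. F (cis (2*pi*t) * z) * cnj (G (cis (2*pi*t) * z)))"
proof -
  have phic: "continuous_on {0..1} (\<lambda>t. cnj (G (cis (2*pi*t) * z)))"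
  proof -
    have "continuous_on {0..1} (\<lambda>t. cis (2*pi*t) * z)" by (intro continuous_intros)
    moreover have "(\<lambda>t. cis (2*pi*t) * z) ` {0..1} \<subseteq> ball 0 1" using z by auto
    ultimately have "continuous_on {0..1} (\<lambda>t. G (cis (2*pi*t) * z))"
      using continuous_on_compose2[OF Gc] by blast
    then show ?thesis by (intro continuous_intros)
  qed
  have "(\<lambda>n. a n * z^n * circ_avg (\<lambda>t. cis (2*pi*t)^n * cnj (G (cis (2*pi*t) * z)))) sums
          circ_avg (\<lambda>t. F (cis (2*pi*t) * z) * cnj (G (cis (2*pi*t) * z)))"
    by (rule circ_series[OF sa z phic])
  moreover have "circ_avg (\<lambda>t. cis (2*pi*t)^n * cnj (G (cis (2*pi*t) * z))) = cnj (b n * z^n)" for n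
  proof -
    have "circ_avg (\<lambda>t. cis (2*pi*t)^n * cnj (G (cis (2*pi*t) * z)))
        = cnj (circ_avg (\<lambda>t. G (cis (2*pi*t) * z) * cnj (cis (2*pi*t)) ^ n))"
    proof -
      have "(\<lambda>t. indicator {0..1} t *\<^sub>R (cis (2*pi*t)^n * cnj (G (cis (2*pi*t) * z))))
          = (\<lambda>t. cnj (indicator {0..1} t *\<^sub>R (G (cis (2*pi*t) * z) * cnj (cis (2*pi*t)) ^ n)))"
        by (auto simp: fun_eq_iff indicator_def)
      then show ?thesis unfolding circ_avg_alt by (simp only: Bochner_Integration.integral_cnj)
    qed
    also have "\<dots> = cnj (b n * z^n)" by (simp only: circ_coeff[OF sb z])
    finally show ?thesis .
  qed
  ultimately have "(\<lambda>n. a n * z^n * cnj (b n * z^n)) sums circ_avg (\<lambda>t. F (cis (2*pi*t) * z) * cnj (G (cis (2*pi*t) * z)))"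
    by simp
  moreover have "(\<lambda>n. a n * z^n * cnj (b n * z^n)) = (\<lambda>n. a n * cnj (b n) * (z * cnj z)^n)"
    by (simp add: fun_eq_iff power_mult_distrib)
  ultimately show ?thesis by simp
qed

lemma emeasure_ball_complex: "r \<ge> 0 \<Longrightarrow> emeasure lborel (ball (0::complex) r) = ennreal (pi * r^2)"
  using emeasure_ball[of r "0::complex"] by (simp add: unit_ball_vol_2)

lemma emeasure_cball_complex: "r \<ge> 0 \<Longrightarrow> emeasure lborel (cball (0::complex) r) = ennreal (pi * r^2)"
  using emeasure_cball[of r "0::complex"] by (simp add: unit_ball_vol_2)

lemma meas_normsq: "(\<lambda>z::complex. (norm z)^2) \<in> borel_measurable borel"
  by (rule borel_measurable_continuous_onI) (intro continuous_intros)

lemma meas_ind_ball[measurable]: "(indicator (ball (0::complex) 1) :: complex \<Rightarrow> 'a::{zero_neq_one,topological_space}) \<in> borel_measurable borel"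
  by (rule borel_measurable_indicator) simp

lemma radial_distr:
  "distr (density lborel (indicator (ball (0::complex) 1))) borel (\<lambda>z. (norm z)^2)
     = density lborel (\<lambda>s::real. ennreal pi * indicator {0..1} s)"
proof (rule measure_eqI_lessThan)
  have m: "(\<lambda>z::complex. (norm z)^2) \<in> density lborel (indicator (ball (0::complex) 1)) \<rightarrow>\<^sub>M borel"
    using meas_normsq by simp
  have M: "emeasure (distr (density lborel (indicator (ball (0::complex) 1))) borel (\<lambda>z. (norm z)^2)) {x<..}
      = emeasure lborel (ball (0::complex) 1 \<inter> {z::complex. x < (norm z)^2})" for x
  proof -
    have S: "{z::complex. x < (norm z)^2} \<in> sets borel"
      using measurable_sets_borel[OF meas_normsq, of "{x<..}"] by (simp add: vimage_def)
    have "emeasure (distr (density lborel (indicator (ball (0::complex) 1))) borel (\<lambda>z. (norm z)^2)) {x<..}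
        = emeasure (density lborel (indicator (ball (0::complex) 1))) {z::complex. x < (norm z)^2}"
      by (subst emeasure_distr[OF m]) (auto simp: vimage_def)
    also have "\<dots> = (\<integral>\<^sup>+ z. indicator (ball 0 1) z * indicator {z::complex. x < (norm z)^2} z \<partial>lborel)"
      using S by (subst emeasure_density) auto
    also have "\<dots> = (\<integral>\<^sup>+ z. indicator (ball 0 1 \<inter> {z::complex. x < (norm z)^2}) z \<partial>lborel)"
      by (intro nn_integral_cong) (auto simp: indicator_def)
    also have "\<dots> = emeasure lborel (ball 0 1 \<inter> {z::complex. x < (norm z)^2})"
      using S by (intro nn_integral_indicator) auto
    finally show ?thesis .
  qed
  have N: "emeasure (density lborel (\<lambda>s::real. ennreal pi * indicator {0..1} s)) {x<..}
      = ennreal pi * emeasure lborel ({0..1} \<inter> {x<..})" for x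
  proof -
    have "emeasure (density lborel (\<lambda>s::real. ennreal pi * indicator {0..1} s)) {x<..}
        = (\<integral>\<^sup>+ s. ennreal pi * indicator {0..1} s * indicator {x<..} s \<partial>lborel)"
      by (subst emeasure_density) auto
    also have "\<dots> = (\<integral>\<^sup>+ s. ennreal pi * indicator ({0..1} \<inter> {x<..}) s \<partial>lborel)"
      by (intro nn_integral_cong) (auto simp: indicator_def)
    also have "\<dots> = ennreal pi * emeasure lborel ({0..1} \<inter> {x<..})"
      by (rule nn_integral_cmult_indicator) auto
    finally show ?thesis .
  qed
  fix x :: real
  show "emeasure (distr (density lborel (indicator (ball (0::complex) 1))) borel (\<lambda>z. (norm z)^2)) {x<..} < \<infinity>"
  proof -
    have "emeasure lborel (ball (0::complex) 1 \<inter> {z::complex. x < (norm z)^2}) \<le> emeasure lborel (ball (0::complex) 1)"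
      by (rule emeasure_mono) auto
    then show ?thesis using emeasure_lborel_ball_finite[of "0::complex" 1] by (simp add: M)
  qed
  show "emeasure (distr (density lborel (indicator (ball (0::complex) 1))) borel (\<lambda>z. (norm z)^2)) {x<..}
      = emeasure (density lborel (\<lambda>s::real. ennreal pi * indicator {0..1} s)) {x<..}"
    unfolding M N
  proof (cases "x < 0")
    case True
    then have "ball 0 1 \<inter> {z::complex. x < (norm z)^2} = ball 0 1"
      using order.strict_trans2[OF True zero_le_power2] by auto
    moreover have "{0..1} \<inter> {x<..} = {0..1::real}" using True by auto
    ultimately show "emeasure lborel (ball 0 1 \<inter> {z::complex. x < (norm z)^2}) = ennreal pi * emeasure lborel ({0..1} \<inter> {x<..})"
      by (simp add: emeasure_ball_complex)
  next
    case False
    show "emeasure lborel (ball 0 1 \<inter> {z::complex. x < (norm z)^2}) = ennreal pi * emeasure lborel ({0..1} \<inter> {x<..})"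
    proof (cases "x < 1")
      case True
      have x0: "0 \<le> x" using False by simp
      have eq: "ball 0 1 \<inter> {z::complex. x < (norm z)^2} = ball 0 1 - cball 0 (sqrt x)"
      proof -
        have "x < (norm z)^2 \<longleftrightarrow> sqrt x < norm z" for z :: complex
        proof -
          have "sqrt ((norm z)^2) = norm z" by simp
          then show ?thesis by (metis real_sqrt_less_iff)
        qed
        then show ?thesis by (intro set_eqI) (simp add: dist_norm not_le)
      qed
      have s1: "sqrt x < 1" using True x0 by simp
      have sub: "cball 0 (sqrt x) \<subseteq> ball (0::complex) 1"
        by (auto simp: dist_norm intro: le_less_trans[OF _ s1])
      have "emeasure lborel (ball 0 1 - cball (0::complex) (sqrt x)) = emeasure lborel (ball (0::complex) 1) - emeasure lborel (cball (0::complex) (sqrt x))"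
        by (rule emeasure_Diff) (use sub emeasure_lborel_cball_finite[of "0::complex" "sqrt x"] in auto)
      also have "\<dots> = ennreal pi - ennreal (pi * x)"
        using x0 by (simp add: emeasure_ball_complex emeasure_cball_complex)
      also have "\<dots> = ennreal (pi * (1 - x))"
        using True x0 by (simp add: ennreal_minus[symmetric] algebra_simps)
      finally have L: "emeasure lborel (ball 0 1 \<inter> {z::complex. x < (norm z)^2}) = ennreal (pi * (1 - x))"
        unfolding eq .
      have "{0..1} \<inter> {x<..} = {x<..1::real}" using x0 by auto
      then have R: "emeasure lborel ({0..1} \<inter> {x<..}) = ennreal (1 - x)" using emeasure_lborel_Ioc[of x 1] True by simp
      show ?thesis unfolding L R using x0 True by (simp add: ennreal_mult')
    next
      case False
      have "(norm z)^2 \<le> x" if "norm z < 1" for z :: complex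
      proof -
        have "(norm z)^2 \<le> 1" using that by (intro power_le_one) auto
        then show ?thesis using False by simp
      qed
      then have "ball 0 1 \<inter> {z::complex. x < (norm z)^2} = {}"
        by (force simp: dist_norm)
      moreover have "{0..1} \<inter> {x<..} = ({}::real set)" using False by auto
      ultimately show ?thesis by simp
    qed
  qed
qed simp_all

lemma nn_integral_radial:
  fixes F :: "real \<Rightarrow> ennreal"
  assumes F[measurable]: "F \<in> borel_measurable borel"
  shows "(\<integral>\<^sup>+ z. indicator (ball (0::complex) 1) z * F ((norm z)^2) \<partial>lborel)
       = (\<integral>\<^sup>+ s. ennreal pi * indicator {0..1} s * F s \<partial>lborel)"
proof -
  have m: "(\<lambda>z::complex. (norm z)^2) \<in> density lborel (indicator (ball (0::complex) 1)) \<rightarrow>\<^sub>M borel"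
    using meas_normsq by simp
  have "(\<integral>\<^sup>+ z. indicator (ball (0::complex) 1) z * F ((norm z)^2) \<partial>lborel)
      = (\<integral>\<^sup>+ z. F ((norm z)^2) \<partial>density lborel (indicator (ball (0::complex) 1)))"
    using meas_normsq by (subst nn_integral_density) (auto intro!: measurable_compose[OF _ F] borel_measurable_indicator)
  also have "\<dots> = (\<integral>\<^sup>+ s. F s \<partial>distr (density lborel (indicator (ball (0::complex) 1))) borel (\<lambda>z. (norm z)^2))"
    using nn_integral_distr[OF m, of F] by simp
  also have "\<dots> = (\<integral>\<^sup>+ s. F s \<partial>density lborel (\<lambda>s::real. ennreal pi * indicator {0..1} s))"
    unfolding radial_distr ..
  also have "\<dots> = (\<integral>\<^sup>+ s. ennreal pi * indicator {0..1} s * F s \<partial>lborel)"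
    by (subst nn_integral_density) auto
  finally show ?thesis .
qed

lemma bw_radial[simp]: "bergman_weight \<alpha> (cis t * z) = bergman_weight \<alpha> z"
  by (simp add: bergman_weight_def)

lemma bw_nonneg: "bergman_weight \<alpha> z \<ge> 0"
  by (simp add: bergman_weight_def)

lemma meas_bw[measurable]: "bergman_weight \<alpha> \<in> borel_measurable borel"
  unfolding bergman_weight_def by measurable

lemma nn_bw_moment:
  "(\<integral>\<^sup>+ z. indicator (ball (0::complex) 1) z * ennreal ((norm z)^(2*m) * bergman_weight \<alpha> z) \<partial>lborel)
   = (\<integral>\<^sup>+ s. indicator {0..1} s * ennreal (s^m * (1 - s) powr \<alpha>) \<partial>lborel)"
proof -
  define F where "F = (\<lambda>s::real. ennreal (s^m * (1 - s) powr \<alpha> / pi))"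
  have Fm[measurable]: "F \<in> borel_measurable borel" unfolding F_def by measurable
  have "(\<integral>\<^sup>+ z. indicator (ball (0::complex) 1) z * ennreal ((norm z)^(2*m) * bergman_weight \<alpha> z) \<partial>lborel)
      = (\<integral>\<^sup>+ z. indicator (ball (0::complex) 1) z * F ((norm z)^2) \<partial>lborel)"
    unfolding F_def bergman_weight_def by (simp add: power_mult)
  also have "\<dots> = (\<integral>\<^sup>+ s. ennreal pi * indicator {0..1} s * F s \<partial>lborel)"
    by (rule nn_integral_radial[OF Fm])
  also have "\<dots> = (\<integral>\<^sup>+ s. indicator {0..1} s * ennreal (s^m * (1 - s) powr \<alpha>) \<partial>lborel)"
  proof (intro nn_integral_cong)
    fix s :: real
    show "ennreal pi * indicator {0..1} s * F s = indicator {0..1} s * ennreal (s^m * (1 - s) powr \<alpha>)"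
      unfolding F_def by (cases "s \<in> {0..1}") (auto simp: ennreal_mult'[symmetric])
  qed
  finally show ?thesis .
qed

lemma nn_powr_01:
  assumes a: "\<alpha> > -1"
  shows "(\<integral>\<^sup>+ s. indicator {0..1} s * ennreal ((1 - s) powr \<alpha>) \<partial>lborel) = ennreal (1 / (\<alpha> + 1))"
proof -
  have "(\<integral>\<^sup>+ s. indicator {0..1} s * ennreal (s powr \<alpha>) \<partial>lborel) = ennreal (1 / (\<alpha> + 1))"
  proof -
    have "(\<integral>\<^sup>+ s. ennreal (indicator {0..1} s * s powr \<alpha>) \<partial>lborel) = 1 powr (\<alpha> + 1) / (\<alpha> + 1)"
      by (rule nn_integral_has_integral_lebesgue[OF _ has_integral_powr_from_0[OF a, of 1]]) auto
    moreover have "(\<lambda>s. ennreal (indicator {0..1} s * s powr \<alpha>)) = (\<lambda>s. indicator {0..1} s * ennreal (s powr \<alpha>))"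
      by (auto simp: fun_eq_iff indicator_def)
    ultimately show ?thesis by simp
  qed
  moreover have "(\<integral>\<^sup>+ s. indicator {0..1} s * ennreal (s powr \<alpha>) \<partial>lborel)
      = (\<integral>\<^sup>+ s. indicator {0..1} s * ennreal ((1 - s) powr \<alpha>) \<partial>lborel)"
  proof -
    have m: "(\<lambda>s::real. indicator {0..1} s * ennreal (s powr \<alpha>)) \<in> borel_measurable borel" by measurable
    have "(\<integral>\<^sup>+ s. indicator {0..1} s * ennreal (s powr \<alpha>) \<partial>lborel)
        = (\<integral>\<^sup>+ s. indicator {0..1} (1 + (-1) * s) * ennreal ((1 + (-1) * s) powr \<alpha>) \<partial>lborel)"
      using nn_integral_real_affine[OF m, of "-1" 1] by simp
    also have "\<dots> = (\<integral>\<^sup>+ s. indicator {0..1} s * ennreal ((1 - s) powr \<alpha>) \<partial>lborel)"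
      by (intro nn_integral_cong) (auto simp: indicator_def)
    finally show ?thesis .
  qed
  ultimately show ?thesis by simp
qed

lemma nn_beta_finite:
  assumes a: "\<alpha> > -1"
  shows "(\<integral>\<^sup>+ s. indicator {0..1} s * ennreal (s^m * (1 - s) powr \<alpha>) \<partial>lborel) < \<infinity>"
proof -
  have "(\<integral>\<^sup>+ s. indicator {0..1} s * ennreal (s^m * (1 - s) powr \<alpha>) \<partial>lborel)
      \<le> (\<integral>\<^sup>+ s. indicator {0..1} s * ennreal ((1 - s) powr \<alpha>) \<partial>lborel)"
  proof (intro nn_integral_mono)
    fix s :: real
    show "indicator {0..1} s * ennreal (s^m * (1 - s) powr \<alpha>) \<le> indicator {0..1} s * ennreal ((1 - s) powr \<alpha>)"
    proof (cases "s \<in> {0..1}")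
      case True
      then have "s^m \<le> 1" by (intro power_le_one) auto
      then have "s^m * (1 - s) powr \<alpha> \<le> 1 * (1 - s) powr \<alpha>"
        by (intro mult_right_mono) auto
      then show ?thesis using True by (simp add: ennreal_leI)
    qed simp
  qed
  also have "\<dots> < \<infinity>" unfolding nn_powr_01[OF a] by simp
  finally show ?thesis .
qed

lemma nn_beta_pos:
  "(\<integral>\<^sup>+ s. indicator {0..1} s * ennreal (s^m * (1 - s) powr \<alpha>) \<partial>lborel) > 0"
proof (rule ccontr)
  assume "\<not> ?thesis"
  then have "(\<integral>\<^sup>+ s. indicator {0..1} s * ennreal (s^m * (1 - s) powr \<alpha>) \<partial>lborel) = 0" by simp
  then have "AE s in lborel. indicator {0..1} s * ennreal (s^m * (1 - s) powr \<alpha>) = 0"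
    by (subst (asm) nn_integral_0_iff_AE) auto
  then have "AE s in lborel. s \<notin> {0<..<1::real}"
    by (rule AE_mp) (auto intro!: AE_I2 simp: indicator_def)
  then have "emeasure lborel {0<..<1::real} = 0"
    by (subst (asm) AE_iff_measurable[of "{0<..<1}"]) auto
  then show False by simp
qed

definition cw :: "real \<Rightarrow> nat \<Rightarrow> real" where
  "cw \<alpha> m = (LINT z:ball 0 1|lborel. (norm z)^(2*m) * bergman_weight \<alpha> z)"

lemma cw_integrable:
  assumes a: "\<alpha> > -1"
  shows "set_integrable lborel (ball (0::complex) 1) (\<lambda>z. (norm z)^(2*m) * bergman_weight \<alpha> z)"
  unfolding set_integrable_def
proof (rule integrableI_nonneg)
  show "(\<lambda>z::complex. indicator (ball 0 1) z *\<^sub>R ((norm z)^(2*m) * bergman_weight \<alpha> z)) \<in> borel_measurable lborel"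
    by measurable
  show "AE z in lborel. 0 \<le> indicator (ball (0::complex) 1) z *\<^sub>R ((norm z)^(2*m) * bergman_weight \<alpha> z)"
    by (intro AE_I2) (simp add: bw_nonneg)
  have "(\<integral>\<^sup>+ z. ennreal (indicator (ball (0::complex) 1) z *\<^sub>R ((norm z)^(2*m) * bergman_weight \<alpha> z)) \<partial>lborel)
      = (\<integral>\<^sup>+ z. indicator (ball (0::complex) 1) z * ennreal ((norm z)^(2*m) * bergman_weight \<alpha> z) \<partial>lborel)"
    by (intro nn_integral_cong) (simp add: indicator_def)
  also have "\<dots> < \<infinity>" unfolding nn_bw_moment by (rule nn_beta_finite[OF a])
  finally show "(\<integral>\<^sup>+ z. ennreal (indicator (ball (0::complex) 1) z *\<^sub>R ((norm z)^(2*m) * bergman_weight \<alpha> z)) \<partial>lborel) < \<infinity>" .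
qed

lemma cw_pos:
  assumes a: "\<alpha> > -1"
  shows "cw \<alpha> m > 0"
proof -
  have i: "integrable lborel (\<lambda>z::complex. indicator (ball 0 1) z *\<^sub>R ((norm z)^(2*m) * bergman_weight \<alpha> z))"
    using cw_integrable[OF a] unfolding set_integrable_def .
  have "ennreal (cw \<alpha> m) = (\<integral>\<^sup>+ z. ennreal (indicator (ball (0::complex) 1) z *\<^sub>R ((norm z)^(2*m) * bergman_weight \<alpha> z)) \<partial>lborel)"
    unfolding cw_def set_lebesgue_integral_def
    by (rule nn_integral_eq_integral[OF i, symmetric]) (simp add: bw_nonneg)
  also have "\<dots> = (\<integral>\<^sup>+ z. indicator (ball (0::complex) 1) z * ennreal ((norm z)^(2*m) * bergman_weight \<alpha> z) \<partial>lborel)"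
    by (intro nn_integral_cong) (simp add: indicator_def)
  also have "\<dots> > 0" unfolding nn_bw_moment by (rule nn_beta_pos)
  finally show ?thesis by simp
qed

lemma holo_sums:
  assumes "f holomorphic_on ball 0 1" "w \<in> ball 0 1"
  shows "(\<lambda>n. (deriv ^^ n) f 0 / fact n * w^n) sums f w"
  using holomorphic_power_series[OF assms] by simp

lemma meas_ind_cont:
  fixes h :: "complex \<Rightarrow> complex"
  assumes "continuous_on (ball 0 1) h"
  shows "(\<lambda>z. indicator (ball 0 1) z *\<^sub>R h z) \<in> borel_measurable borel"
  by (rule borel_measurable_continuous_on_indicator[OF _ assms]) simp

lemma w_integrable:
  assumes a: "\<alpha> > -1"
  shows "integrable lborel (\<lambda>z::complex. indicator (ball 0 1) z *\<^sub>R bergman_weight \<alpha> z)"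
  using cw_integrable[OF a, of 0] unfolding set_integrable_def by simp

lemma bounded_in_A2:
  assumes a: "\<alpha> > -1" and h: "h holomorphic_on ball 0 1" and B: "\<And>z. z \<in> ball 0 1 \<Longrightarrow> norm (h z) \<le> B"
  shows "h \<in> A2 \<alpha>"
  unfolding A2_def set_integrable_def
proof (intro CollectI conjI h)
  have hc: "continuous_on (ball 0 1) (\<lambda>z. complex_of_real ((norm (h z))^2))"
    using holomorphic_on_imp_continuous_on[OF h] by (intro continuous_intros)
  have m1: "(\<lambda>z. indicator (ball 0 1) z *\<^sub>R complex_of_real ((norm (h z))^2)) \<in> borel_measurable borel"
    by (rule meas_ind_cont[OF hc])
  then have m1': "(\<lambda>z. indicator (ball 0 1) z *\<^sub>R ((norm (h z))^2)) \<in> borel_measurable borel"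
    using measurable_compose[OF m1 borel_measurable_Re] by simp
  have m: "(\<lambda>z. indicator (ball 0 1) z *\<^sub>R ((norm (h z))^2 * bergman_weight \<alpha> z)) \<in> borel_measurable lborel"
  proof -
    have "(\<lambda>z. (indicator (ball 0 1) z *\<^sub>R ((norm (h z))^2)) * bergman_weight \<alpha> z) \<in> borel_measurable borel"
      using m1' by measurable
    then show ?thesis by (simp add: mult.assoc)
  qed
  show "integrable lborel (\<lambda>z. indicator (ball 0 1) z *\<^sub>R ((norm (h z))^2 * bergman_weight \<alpha> z))"
  proof (rule Bochner_Integration.integrable_bound[OF _ m])
    show "integrable lborel (\<lambda>z::complex. B^2 * (indicator (ball 0 1) z *\<^sub>R bergman_weight \<alpha> z))"
      by (intro integrable_mult_right w_integrable[OF a])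
    show "AE z in lborel. norm (indicator (ball 0 1) z *\<^sub>R ((norm (h z))^2 * bergman_weight \<alpha> z))
             \<le> norm (B^2 * (indicator (ball 0 1) z *\<^sub>R bergman_weight \<alpha> z))"
    proof (intro AE_I2)
      fix z :: complex
      show "norm (indicator (ball 0 1) z *\<^sub>R ((norm (h z))^2 * bergman_weight \<alpha> z))
             \<le> norm (B^2 * (indicator (ball 0 1) z *\<^sub>R bergman_weight \<alpha> z))"
      proof (cases "z \<in> ball 0 1")
        case True
        have "(norm (h z))^2 \<le> B^2" using B[OF True] by (intro power_mono) auto
        then have "(norm (h z))^2 * bergman_weight \<alpha> z \<le> B^2 * bergman_weight \<alpha> z"
          by (intro mult_right_mono bw_nonneg)
        then show ?thesis using True bw_nonneg[of \<alpha> z] by (simp add: abs_mult)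
      qed simp
    qed
  qed
qed

lemma A2_inner_cnj: "cnj (A2_inner \<alpha> f g) = A2_inner \<alpha> g f"
  unfolding A2_inner_def set_lebesgue_integral_def
  by (simp only: Bochner_Integration.integral_cnj[symmetric]) (simp add: mult.commute mult.left_commute)

lemma coef_inner:
  assumes a: "\<alpha> > -1" and h: "h holomorphic_on ball 0 1" and B: "\<And>z. z \<in> ball 0 1 \<Longrightarrow> norm (h z) \<le> B"
  shows "A2_inner \<alpha> h (\<lambda>z. z^m) = (deriv ^^ m) h 0 / fact m * complex_of_real (cw \<alpha> m)"
proof -
  define am where "am = (deriv ^^ m) h 0 / fact m"
  define G where "G = (\<lambda>z. indicator (ball 0 1) z *\<^sub>R (h z * cnj (z^m) * complex_of_real (bergman_weight \<alpha> z)))"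
  have hc: "continuous_on (ball 0 1) (\<lambda>z. h z * cnj (z^m))"
    using holomorphic_on_imp_continuous_on[OF h] by (intro continuous_intros)
  have Gm: "G \<in> borel_measurable lborel"
  proof -
    have "(\<lambda>z. (indicator (ball 0 1) z *\<^sub>R (h z * cnj (z^m))) * complex_of_real (bergman_weight \<alpha> z)) \<in> borel_measurable borel"
      using meas_ind_cont[OF hc] by measurable
    then show ?thesis unfolding G_def by (simp add: mult.assoc)
  qed
  have Gi: "integrable lborel G"
  proof (rule Bochner_Integration.integrable_bound[OF _ Gm])
    show "integrable lborel (\<lambda>z::complex. B * (indicator (ball 0 1) z *\<^sub>R bergman_weight \<alpha> z))"
      by (intro integrable_mult_right w_integrable[OF a])
    show "AE z in lborel. norm (G z) \<le> norm (B * (indicator (ball 0 1) z *\<^sub>R bergman_weight \<alpha> z))"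
    proof (intro AE_I2)
      fix z :: complex
      show "norm (G z) \<le> norm (B * (indicator (ball 0 1) z *\<^sub>R bergman_weight \<alpha> z))"
      proof (cases "z \<in> ball 0 1")
        case True
        have nz: "norm z \<le> 1" using True by simp
        have B0: "B \<ge> 0" by (rule order_trans[OF norm_ge_zero B[OF True]])
        have "norm (h z * cnj (z^m)) \<le> B * 1"
          unfolding norm_mult complex_mod_cnj norm_power
          by (intro mult_mono B[OF True] power_le_one nz B0) auto
        then have "norm (h z * cnj (z^m)) * bergman_weight \<alpha> z \<le> B * bergman_weight \<alpha> z"
          by (intro mult_right_mono bw_nonneg) simp
        moreover note B0
        ultimately show ?thesis using True bw_nonneg[of \<alpha> z] unfolding G_def
          by (simp add: norm_mult abs_mult)
      qed (simp add: G_def)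
    qed
  qed
  have inner: "(\<integral> t. indicator {0..1} t *\<^sub>R G (cis (2 * pi * t) * z) \<partial>lborel)
      = am * complex_of_real (indicator (ball 0 1) z * ((norm z)^(2*m) * bergman_weight \<alpha> z))" for z
  proof (cases "z \<in> ball 0 1")
    case True
    define c where "c = cnj z ^ m * complex_of_real (bergman_weight \<alpha> z)"
    have "(\<lambda>t. indicator {0..1} t *\<^sub>R G (cis (2 * pi * t) * z))
        = (\<lambda>t. c * (indicator {0..1} t *\<^sub>R (h (cis (2 * pi * t) * z) * cnj (cis (2 * pi * t)) ^ m)))"
      using True unfolding G_def c_def by (auto simp: fun_eq_iff power_mult_distrib)
    then have "(\<integral> t. indicator {0..1} t *\<^sub>R G (cis (2 * pi * t) * z) \<partial>lborel)
        = c * circ_avg (\<lambda>t. h (cis (2 * pi * t) * z) * cnj (cis (2 * pi * t)) ^ m)"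
      unfolding circ_avg_alt by (simp only: integral_mult_right_zero)
    also have "\<dots> = c * (am * z^m)"
      unfolding am_def by (subst circ_coeff[OF holo_sums[OF h] True]) simp_all
    also have "\<dots> = am * complex_of_real (indicator (ball 0 1) z * ((norm z)^(2*m) * bergman_weight \<alpha> z))"
    proof -
      have "cnj z ^ m * z ^ m = (z * cnj z)^m" by (simp add: power_mult_distrib mult.commute)
      also have "\<dots> = (complex_of_real (norm z)^2)^m" using complex_norm_square[of z] by simp
      also have "\<dots> = complex_of_real ((norm z)^(2*m))" by (simp add: power_mult)
      finally have "cnj z ^ m * z ^ m = complex_of_real ((norm z)^(2*m))" .
      then show ?thesis using True unfolding c_def by (simp add: mult_ac)
    qed
    finally show ?thesis .
  next
    case False
    then show ?thesis unfolding G_def by simp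
  qed
  have "A2_inner \<alpha> h (\<lambda>z. z^m) = integral\<^sup>L lborel G"
    unfolding A2_inner_def set_lebesgue_integral_def G_def ..
  also have "\<dots> = (\<integral> z. (\<integral> t. indicator {0..1} t *\<^sub>R G (cis (2 * pi * t) * z) \<partial>lborel) \<partial>lborel)"
    by (rule integral_avg[OF Gi])
  also have "\<dots> = (\<integral> z. am * complex_of_real (indicator (ball 0 1) z * ((norm z)^(2*m) * bergman_weight \<alpha> z)) \<partial>lborel)"
    unfolding inner ..
  also have "\<dots> = am * complex_of_real (cw \<alpha> m)"
    unfolding cw_def set_lebesgue_integral_def by (simp only: integral_mult_right_zero integral_complex_of_real) simp
  finally show ?thesis unfolding am_def .
qed

lemma norm_mult_cis[simp]: "norm (z * cis a) = norm z"
  by (simp add: norm_mult)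

lemma bw_radial2[simp]: "bergman_weight \<alpha> (z * cis t) = bergman_weight \<alpha> z"
  by (simp add: bergman_weight_def)

lemma circ_nn:
  fixes c :: "nat \<Rightarrow> complex" and F :: "complex \<Rightarrow> complex"
  assumes sums: "\<And>w. w \<in> ball 0 1 \<Longrightarrow> (\<lambda>n. c n * w^n) sums F w"
    and Fc: "continuous_on (ball 0 1) F" and z: "z \<in> ball 0 1"
  shows "(\<lambda>n. (norm (c n))^2 * (norm z)^(2*n)) sums
           (\<integral> t. indicator {0..1} t * (norm (F (cis (2 * pi * t) * z)))^2 \<partial>lborel)"
    and "(\<integral>\<^sup>+ t. indicator {0..1} t * ennreal ((norm (F (cis (2 * pi * t) * z)))^2) \<partial>lborel)
           = ennreal (\<Sum>n. (norm (c n))^2 * (norm z)^(2*n))"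
proof -
  have P: "(\<lambda>n. c n * cnj (c n) * (z * cnj z)^n) sums circ_avg (\<lambda>t. F (cis (2*pi*t) * z) * cnj (F (cis (2*pi*t) * z)))"
    by (rule circ_parseval[OF sums sums Fc z])
  have e1: "(\<lambda>n. c n * cnj (c n) * (z * cnj z)^n) = (\<lambda>n. complex_of_real ((norm (c n))^2 * (norm z)^(2*n)))"
    by (simp add: fun_eq_iff complex_norm_square[symmetric] power_mult)
  have e2: "circ_avg (\<lambda>t. F (cis (2*pi*t) * z) * cnj (F (cis (2*pi*t) * z)))
      = complex_of_real (\<integral> t. indicator {0..1} t * (norm (F (cis (2 * pi * t) * z)))^2 \<partial>lborel)"
  proof -
    have "(\<lambda>t. indicator {0..1} t *\<^sub>R (F (cis (2*pi*t) * z) * cnj (F (cis (2*pi*t) * z))))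
        = (\<lambda>t. complex_of_real (indicator {0..1} t * (norm (F (cis (2 * pi * t) * z)))^2))"
      by (auto simp: fun_eq_iff complex_norm_square[symmetric] indicator_def)
    then show ?thesis unfolding circ_avg_alt by (simp only: integral_complex_of_real)
  qed
  show S: "(\<lambda>n. (norm (c n))^2 * (norm z)^(2*n)) sums
           (\<integral> t. indicator {0..1} t * (norm (F (cis (2 * pi * t) * z)))^2 \<partial>lborel)"
    using P unfolding e1 e2 by (simp only: sums_of_real_iff)
  have Fc2: "continuous_on {0..1} (\<lambda>t. (norm (F (cis (2 * pi * t) * z)))^2)"
  proof -
    have "continuous_on {0..1} (\<lambda>t. cis (2*pi*t) * z)" by (intro continuous_intros)
    moreover have "(\<lambda>t. cis (2*pi*t) * z) ` {0..1} \<subseteq> ball 0 1" using z by auto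
    ultimately have "continuous_on {0..1} (\<lambda>t. F (cis (2*pi*t) * z))"
      using continuous_on_compose2[OF Fc] by blast
    then show ?thesis by (intro continuous_intros)
  qed
  have i: "integrable lborel (\<lambda>t. indicator {0..1} t * (norm (F (cis (2 * pi * t) * z)))^2)"
    using borel_integrable_compact[OF compact_Icc Fc2] by simp
  have "(\<integral>\<^sup>+ t. indicator {0..1} t * ennreal ((norm (F (cis (2 * pi * t) * z)))^2) \<partial>lborel)
      = (\<integral>\<^sup>+ t. ennreal (indicator {0..1} t * (norm (F (cis (2 * pi * t) * z)))^2) \<partial>lborel)"
    by (intro nn_integral_cong) (simp add: indicator_def)
  also have "\<dots> = ennreal (\<integral> t. indicator {0..1} t * (norm (F (cis (2 * pi * t) * z)))^2 \<partial>lborel)"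
    by (rule nn_integral_eq_integral[OF i]) simp
  also have "\<dots> = ennreal (\<Sum>n. (norm (c n))^2 * (norm z)^(2*n))"
    using S by (simp add: sums_iff)
  finally show "(\<integral>\<^sup>+ t. indicator {0..1} t * ennreal ((norm (F (cis (2 * pi * t) * z)))^2) \<partial>lborel)
           = ennreal (\<Sum>n. (norm (c n))^2 * (norm z)^(2*n))" .
qed

lemma holo_dilate:
  assumes f: "f holomorphic_on ball 0 1" and d: "norm \<delta> \<le> 1"
  shows "(\<lambda>z. f (\<delta> * z)) holomorphic_on ball 0 1"
proof -
  have "(\<lambda>z. \<delta> * z) ` ball 0 1 \<subseteq> ball 0 1"
  proof
    fix w assume "w \<in> (\<lambda>z. \<delta> * z) ` ball 0 1"
    then obtain z where "z \<in> ball 0 1" "w = \<delta> * z" by auto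
    then have "norm w \<le> norm z" using d by (simp add: norm_mult mult_left_le_one_le)
    then show "w \<in> ball 0 1" using \<open>z \<in> ball 0 1\<close> by simp
  qed
  then have "f holomorphic_on (\<lambda>z. \<delta> * z) ` ball 0 1" using holomorphic_on_subset[OF f] by blast
  then show ?thesis
    using holomorphic_on_compose[of "\<lambda>z. \<delta> * z" "ball 0 1" f] by (simp add: o_def holomorphic_intros)
qed

lemma dilate_sums:
  assumes f: "f holomorphic_on ball 0 1" and d: "norm \<delta> \<le> 1" and w: "w \<in> ball 0 1"
  shows "(\<lambda>n. ((deriv ^^ n) f 0 / fact n * \<delta>^n) * w^n) sums f (\<delta> * w)"
proof -
  have "\<delta> * w \<in> ball 0 1" using w d by (simp add: norm_mult) (meson le_less_trans mult_left_le_one_le norm_ge_zero)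
  from holo_sums[OF f this] show ?thesis by (simp add: power_mult_distrib mult_ac)
qed

lemma nn_A2_avg:
  fixes F :: "complex \<Rightarrow> complex"
  assumes Fh: "F holomorphic_on ball 0 1"
  shows "(\<integral>\<^sup>+ z. ennreal (indicator (ball 0 1) z * ((norm (F z))^2 * bergman_weight \<alpha> z)) \<partial>lborel)
       = (\<integral>\<^sup>+ z. ennreal (indicator (ball 0 1) z * bergman_weight \<alpha> z) *
              (\<integral>\<^sup>+ t. indicator {0..1} t * ennreal ((norm (F (cis (2 * pi * t) * z)))^2) \<partial>lborel) \<partial>lborel)"
proof -
  have Fc: "continuous_on (ball 0 1) (\<lambda>z. complex_of_real ((norm (F z))^2))"
    using holomorphic_on_imp_continuous_on[OF Fh] by (intro continuous_intros)
  have m0: "(\<lambda>z. indicator (ball 0 1) z *\<^sub>R ((norm (F z))^2)) \<in> borel_measurable borel"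
    using measurable_compose[OF meas_ind_cont[OF Fc] borel_measurable_Re] by simp
  have m: "(\<lambda>z. ennreal (indicator (ball 0 1) z * ((norm (F z))^2 * bergman_weight \<alpha> z))) \<in> borel_measurable borel"
  proof -
    have "(\<lambda>z. ennreal ((indicator (ball 0 1) z *\<^sub>R ((norm (F z))^2)) * bergman_weight \<alpha> z)) \<in> borel_measurable borel"
      using m0 by measurable
    then show ?thesis by (simp add: mult.assoc)
  qed
  have "(\<integral>\<^sup>+ z. ennreal (indicator (ball 0 1) z * ((norm (F z))^2 * bergman_weight \<alpha> z)) \<partial>lborel)
      = (\<integral>\<^sup>+ z. (\<integral>\<^sup>+ t. indicator {0..1} t * ennreal (indicator (ball 0 1) (cis (2 * pi * t) * z) *
             ((norm (F (cis (2 * pi * t) * z)))^2 * bergman_weight \<alpha> (cis (2 * pi * t) * z))) \<partial>lborel) \<partial>lborel)"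
    by (rule nn_integral_avg[OF m])
  also have "\<dots> = (\<integral>\<^sup>+ z. ennreal (indicator (ball 0 1) z * bergman_weight \<alpha> z) *
              (\<integral>\<^sup>+ t. indicator {0..1} t * ennreal ((norm (F (cis (2 * pi * t) * z)))^2) \<partial>lborel) \<partial>lborel)"
  proof (intro nn_integral_cong)
    fix z :: complex
    show "(\<integral>\<^sup>+ t. indicator {0..1} t * ennreal (indicator (ball 0 1) (cis (2 * pi * t) * z) *
             ((norm (F (cis (2 * pi * t) * z)))^2 * bergman_weight \<alpha> (cis (2 * pi * t) * z))) \<partial>lborel)
        = ennreal (indicator (ball 0 1) z * bergman_weight \<alpha> z) *
              (\<integral>\<^sup>+ t. indicator {0..1} t * ennreal ((norm (F (cis (2 * pi * t) * z)))^2) \<partial>lborel)"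
    proof (cases "z \<in> ball 0 1")
      case False
      then show ?thesis by simp
    next
      case True
    have Fct: "continuous_on UNIV (\<lambda>t. F (cis (2*pi*t) * z))"
    proof -
      have "continuous_on UNIV (\<lambda>t. cis (2*pi*t) * z)" by (intro continuous_intros)
      moreover have "(\<lambda>t. cis (2*pi*t) * z) ` UNIV \<subseteq> ball 0 1" using True by auto
      ultimately show ?thesis
        using continuous_on_compose2[OF holomorphic_on_imp_continuous_on[OF Fh]] by blast
    qed
    have mt: "(\<lambda>t. F (cis (2*pi*t) * z)) \<in> borel_measurable borel"
      by (rule borel_measurable_continuous_onI[OF Fct])
    have "(\<integral>\<^sup>+ t. indicator {0..1} t * ennreal (indicator (ball 0 1) (cis (2 * pi * t) * z) *
             ((norm (F (cis (2 * pi * t) * z)))^2 * bergman_weight \<alpha> (cis (2 * pi * t) * z))) \<partial>lborel)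
        = (\<integral>\<^sup>+ t. ennreal (indicator (ball 0 1) z * bergman_weight \<alpha> z) *
             (indicator {0..1} t * ennreal ((norm (F (cis (2 * pi * t) * z)))^2)) \<partial>lborel)"
      by (intro nn_integral_cong) (auto simp: indicator_def ennreal_mult' bw_nonneg mult_ac)
    also have "\<dots> = ennreal (indicator (ball 0 1) z * bergman_weight \<alpha> z) *
              (\<integral>\<^sup>+ t. indicator {0..1} t * ennreal ((norm (F (cis (2 * pi * t) * z)))^2) \<partial>lborel)"
      by (rule nn_integral_cmult) (use mt in measurable)
    finally show ?thesis .
    qed
  qed
  finally show ?thesis .
qed

lemma A2_holo: "f \<in> A2 \<alpha> \<Longrightarrow> f holomorphic_on ball 0 1"
  by (simp add: A2_def)

lemma A2_nn_finite:
  assumes "f \<in> A2 \<alpha>"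
  shows "(\<integral>\<^sup>+ z. ennreal (indicator (ball 0 1) z * ((norm (f z))^2 * bergman_weight \<alpha> z)) \<partial>lborel) < \<infinity>"
proof -
  have "integrable lborel (\<lambda>z. indicator (ball 0 1) z *\<^sub>R ((norm (f z))^2 * bergman_weight \<alpha> z))"
    using assms unfolding A2_def set_integrable_def by simp
  then have "(\<integral>\<^sup>+ z. ennreal (norm (indicator (ball 0 1) z *\<^sub>R ((norm (f z))^2 * bergman_weight \<alpha> z))) \<partial>lborel) < \<infinity>"
    by (simp add: integrable_iff_bounded)
  moreover have "(\<lambda>z. ennreal (norm (indicator (ball 0 1) z *\<^sub>R ((norm (f z))^2 * bergman_weight \<alpha> z))))
      = (\<lambda>z. ennreal (indicator (ball 0 1) z * ((norm (f z))^2 * bergman_weight \<alpha> z)))"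
    by (auto simp: fun_eq_iff indicator_def bw_nonneg)
  ultimately show ?thesis by simp
qed

lemma A2_dilate:
  assumes a: "\<alpha> > -1" and f: "f \<in> A2 \<alpha>" and d: "norm \<delta> \<le> 1"
  shows "(\<lambda>z. f (\<delta> * z)) \<in> A2 \<alpha>"
proof -
  have fh: "f holomorphic_on ball 0 1" using A2_holo[OF f] .
  have hd: "(\<lambda>z. f (\<delta> * z)) holomorphic_on ball 0 1" by (rule holo_dilate[OF fh d])
  define a where "a n = (deriv ^^ n) f 0 / fact n" for n
  have pw: "ennreal (indicator (ball 0 1) z * bergman_weight \<alpha> z) *
              (\<integral>\<^sup>+ t. indicator {0..1} t * ennreal ((norm (f (\<delta> * (cis (2 * pi * t) * z))))^2) \<partial>lborel)
         \<le> ennreal (indicator (ball 0 1) z * bergman_weight \<alpha> z) *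
              (\<integral>\<^sup>+ t. indicator {0..1} t * ennreal ((norm (f (cis (2 * pi * t) * z)))^2) \<partial>lborel)" for z
  proof (cases "z \<in> ball 0 1")
    case False then show ?thesis by simp
  next
    case True
    have s1: "\<And>w. w \<in> ball 0 1 \<Longrightarrow> (\<lambda>n. (a n * \<delta>^n) * w^n) sums f (\<delta> * w)"
      unfolding a_def by (rule dilate_sums[OF fh d])
    have s2: "\<And>w. w \<in> ball 0 1 \<Longrightarrow> (\<lambda>n. a n * w^n) sums f w"
      unfolding a_def by (rule holo_sums[OF fh])
    note c1 = circ_nn[OF s1 holomorphic_on_imp_continuous_on[OF hd] True]
    note c2 = circ_nn[OF s2 holomorphic_on_imp_continuous_on[OF fh] True]
    have "(\<Sum>n. (norm (a n * \<delta>^n))^2 * (norm z)^(2*n)) \<le> (\<Sum>n. (norm (a n))^2 * (norm z)^(2*n))"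
    proof (rule suminf_le)
      show "summable (\<lambda>n. (norm (a n * \<delta>^n))^2 * (norm z)^(2*n))" using c1(1) by (rule sums_summable)
      show "summable (\<lambda>n. (norm (a n))^2 * (norm z)^(2*n))" using c2(1) by (rule sums_summable)
      fix n
      have "(norm (\<delta>^n))^2 \<le> 1" using d by (simp add: norm_power power_le_one)
      then have "(norm (a n))^2 * (norm (\<delta>^n))^2 \<le> (norm (a n))^2 * 1"
        by (intro mult_left_mono) auto
      then show "(norm (a n * \<delta>^n))^2 * (norm z)^(2*n) \<le> (norm (a n))^2 * (norm z)^(2*n)"
        by (intro mult_right_mono) (auto simp: norm_mult power_mult_distrib)
    qed
    moreover have A: "(\<integral>\<^sup>+ t. indicator {0..1} t * ennreal ((norm (f (\<delta> * (cis (2 * pi * t) * z))))^2) \<partial>lborel)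
        = ennreal (\<Sum>n. (norm (a n * \<delta>^n))^2 * (norm z)^(2*n))"
      using c1(2) by simp
    moreover have B: "(\<integral>\<^sup>+ t. indicator {0..1} t * ennreal ((norm (f (cis (2 * pi * t) * z)))^2) \<partial>lborel)
        = ennreal (\<Sum>n. (norm (a n))^2 * (norm z)^(2*n))"
      using c2(2) by simp
    ultimately show ?thesis
      by (intro mult_left_mono) (auto intro: ennreal_leI)
  qed
  have "(\<integral>\<^sup>+ z. ennreal (indicator (ball 0 1) z * ((norm (f (\<delta> * z)))^2 * bergman_weight \<alpha> z)) \<partial>lborel)
      = (\<integral>\<^sup>+ z. ennreal (indicator (ball 0 1) z * bergman_weight \<alpha> z) *
              (\<integral>\<^sup>+ t. indicator {0..1} t * ennreal ((norm (f (\<delta> * (cis (2 * pi * t) * z))))^2) \<partial>lborel) \<partial>lborel)"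
    by (rule nn_A2_avg[OF hd])
  also have "\<dots> \<le> (\<integral>\<^sup>+ z. ennreal (indicator (ball 0 1) z * bergman_weight \<alpha> z) *
              (\<integral>\<^sup>+ t. indicator {0..1} t * ennreal ((norm (f (cis (2 * pi * t) * z)))^2) \<partial>lborel) \<partial>lborel)"
    by (intro nn_integral_mono pw)
  also have "\<dots> = (\<integral>\<^sup>+ z. ennreal (indicator (ball 0 1) z * ((norm (f z))^2 * bergman_weight \<alpha> z)) \<partial>lborel)"
    by (rule nn_A2_avg[OF fh, symmetric])
  also have "\<dots> < \<infinity>" by (rule A2_nn_finite[OF f])
  finally have fin: "(\<integral>\<^sup>+ z. ennreal (indicator (ball 0 1) z * ((norm (f (\<delta> * z)))^2 * bergman_weight \<alpha> z)) \<partial>lborel) < \<infinity>" .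
  have m: "(\<lambda>z. indicator (ball 0 1) z *\<^sub>R ((norm (f (\<delta> * z)))^2 * bergman_weight \<alpha> z)) \<in> borel_measurable lborel"
  proof -
    have Fc: "continuous_on (ball 0 1) (\<lambda>z. complex_of_real ((norm (f (\<delta> * z)))^2))"
      using holomorphic_on_imp_continuous_on[OF hd] by (intro continuous_intros)
    have m0: "(\<lambda>z. indicator (ball 0 1) z *\<^sub>R ((norm (f (\<delta> * z)))^2)) \<in> borel_measurable borel"
      using measurable_compose[OF meas_ind_cont[OF Fc] borel_measurable_Re] by simp
    have "(\<lambda>z. (indicator (ball 0 1) z *\<^sub>R ((norm (f (\<delta> * z)))^2)) * bergman_weight \<alpha> z) \<in> borel_measurable borel"
      using m0 by measurable
    then show ?thesis by (simp add: mult.assoc)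
  qed
  show ?thesis
    unfolding A2_def set_integrable_def
  proof (intro CollectI conjI hd integrableI_nonneg[OF m])
    show "AE z in lborel. 0 \<le> indicator (ball 0 1) z *\<^sub>R ((norm (f (\<delta> * z)))^2 * bergman_weight \<alpha> z)"
      by (intro AE_I2) (simp add: bw_nonneg)
    show "(\<integral>\<^sup>+ z. ennreal (indicator (ball 0 1) z *\<^sub>R ((norm (f (\<delta> * z)))^2 * bergman_weight \<alpha> z)) \<partial>lborel) < \<infinity>"
      using fin by simp
  qed
qed

lemma A2_prod_integrable:
  assumes F: "F \<in> A2 \<alpha>" and G: "G \<in> A2 \<alpha>"
  shows "integrable lborel (\<lambda>z. indicator (ball 0 1) z *\<^sub>R (F z * cnj (G z) * complex_of_real (bergman_weight \<alpha> z)))"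
proof (rule Bochner_Integration.integrable_bound)
  show "integrable lborel (\<lambda>z. indicator (ball 0 1) z *\<^sub>R ((norm (F z))^2 * bergman_weight \<alpha> z)
                              + indicator (ball 0 1) z *\<^sub>R ((norm (G z))^2 * bergman_weight \<alpha> z))"
    using F G unfolding A2_def set_integrable_def by (intro Bochner_Integration.integrable_add) auto
  have c: "continuous_on (ball 0 1) (\<lambda>z. F z * cnj (G z))"
    using holomorphic_on_imp_continuous_on[OF A2_holo[OF F]] holomorphic_on_imp_continuous_on[OF A2_holo[OF G]]
    by (intro continuous_intros)
  have "(\<lambda>z. (indicator (ball 0 1) z *\<^sub>R (F z * cnj (G z))) * complex_of_real (bergman_weight \<alpha> z)) \<in> borel_measurable borel"
    using meas_ind_cont[OF c] by measurable
  then show "(\<lambda>z. indicator (ball 0 1) z *\<^sub>R (F z * cnj (G z) * complex_of_real (bergman_weight \<alpha> z))) \<in> borel_measurable lborel"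
    by (simp add: mult.assoc)
  show "AE z in lborel. norm (indicator (ball 0 1) z *\<^sub>R (F z * cnj (G z) * complex_of_real (bergman_weight \<alpha> z)))
        \<le> norm (indicator (ball 0 1) z *\<^sub>R ((norm (F z))^2 * bergman_weight \<alpha> z)
                              + indicator (ball 0 1) z *\<^sub>R ((norm (G z))^2 * bergman_weight \<alpha> z))"
  proof (intro AE_I2)
    fix z :: complex
    have w: "bergman_weight \<alpha> z \<ge> 0" by (rule bw_nonneg)
    have "norm (F z) * norm (G z) \<le> (norm (F z))^2 + (norm (G z))^2"
    proof -
      have "0 \<le> (norm (F z) - norm (G z))^2" by simp
      then show ?thesis by (simp add: power2_eq_square algebra_simps) (smt (verit) norm_ge_zero mult_nonneg_nonneg)
    qed
    then have nb: "norm (F z) * norm (G z) * bergman_weight \<alpha> z \<le> ((norm (F z))^2 + (norm (G z))^2) * bergman_weight \<alpha> z"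
      by (intro mult_right_mono w)
    then show "norm (indicator (ball 0 1) z *\<^sub>R (F z * cnj (G z) * complex_of_real (bergman_weight \<alpha> z)))
        \<le> norm (indicator (ball 0 1) z *\<^sub>R ((norm (F z))^2 * bergman_weight \<alpha> z)
                              + indicator (ball 0 1) z *\<^sub>R ((norm (G z))^2 * bergman_weight \<alpha> z))"
    proof (cases "z \<in> ball 0 1")
      case True
      have "norm (F z * cnj (G z) * complex_of_real (bergman_weight \<alpha> z)) = norm (F z) * norm (G z) * bergman_weight \<alpha> z"
        using w by (simp add: norm_mult)
      moreover have "norm ((norm (F z))^2 * bergman_weight \<alpha> z + (norm (G z))^2 * bergman_weight \<alpha> z)
          = ((norm (F z))^2 + (norm (G z))^2) * bergman_weight \<alpha> z"
        using w by (simp add: distrib_right)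
      ultimately show ?thesis using True nb by simp
    qed simp
  qed
qed

lemma A2_inner_alt:
  "A2_inner \<alpha> F G = integral\<^sup>L lborel (\<lambda>z. indicator (ball 0 1) z *\<^sub>R (F z * cnj (G z) * complex_of_real (bergman_weight \<alpha> z)))"
  unfolding A2_inner_def set_lebesgue_integral_def ..

lemma inner_dilate:
  assumes a: "\<alpha> > -1" and f: "f \<in> A2 \<alpha>" and g: "g \<in> A2 \<alpha>" and d: "norm \<delta> \<le> 1"
  shows "A2_inner \<alpha> (\<lambda>z. f (\<delta> * z)) g = A2_inner \<alpha> f (\<lambda>z. g (cnj \<delta> * z))"
proof -
  have fh: "f holomorphic_on ball 0 1" using A2_holo[OF f] .
  have gh: "g holomorphic_on ball 0 1" using A2_holo[OF g] .
  have d': "norm (cnj \<delta>) \<le> 1" using d by simp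
  have fd: "(\<lambda>z. f (\<delta> * z)) \<in> A2 \<alpha>" by (rule A2_dilate[OF a f d])
  have gd: "(\<lambda>z. g (cnj \<delta> * z)) \<in> A2 \<alpha>" by (rule A2_dilate[OF a g d'])
  define G1 where "G1 = (\<lambda>z. indicator (ball 0 1) z *\<^sub>R (f (\<delta> * z) * cnj (g z) * complex_of_real (bergman_weight \<alpha> z)))"
  define G2 where "G2 = (\<lambda>z. indicator (ball 0 1) z *\<^sub>R (f z * cnj (g (cnj \<delta> * z)) * complex_of_real (bergman_weight \<alpha> z)))"
  have i1: "integrable lborel G1" unfolding G1_def by (rule A2_prod_integrable[OF fd g])
  have i2: "integrable lborel G2" unfolding G2_def by (rule A2_prod_integrable[OF f gd])
  define a where "a n = (deriv ^^ n) f 0 / fact n" for n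
  define b where "b n = (deriv ^^ n) g 0 / fact n" for n
  have sa: "\<And>w. w \<in> ball 0 1 \<Longrightarrow> (\<lambda>n. a n * w^n) sums f w" unfolding a_def by (rule holo_sums[OF fh])
  have sb: "\<And>w. w \<in> ball 0 1 \<Longrightarrow> (\<lambda>n. b n * w^n) sums g w" unfolding b_def by (rule holo_sums[OF gh])
  have sa': "\<And>w. w \<in> ball 0 1 \<Longrightarrow> (\<lambda>n. (a n * \<delta>^n) * w^n) sums f (\<delta> * w)"
    unfolding a_def by (rule dilate_sums[OF fh d])
  have sb': "\<And>w. w \<in> ball 0 1 \<Longrightarrow> (\<lambda>n. (b n * cnj \<delta>^n) * w^n) sums g (cnj \<delta> * w)"
    unfolding b_def by (rule dilate_sums[OF gh d'])
  have gc: "continuous_on (ball 0 1) g" by (rule holomorphic_on_imp_continuous_on[OF gh])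
  have gc': "continuous_on (ball 0 1) (\<lambda>z. g (cnj \<delta> * z))"
    by (rule holomorphic_on_imp_continuous_on[OF holo_dilate[OF gh d']])
  have inner: "(\<integral> t. indicator {0..1} t *\<^sub>R G1 (cis (2 * pi * t) * z) \<partial>lborel)
             = (\<integral> t. indicator {0..1} t *\<^sub>R G2 (cis (2 * pi * t) * z) \<partial>lborel)" for z
  proof (cases "z \<in> ball 0 1")
    case False
    then show ?thesis unfolding G1_def G2_def by simp
  next
    case True
    define c where "c = complex_of_real (bergman_weight \<alpha> z)"
    have e1: "(\<lambda>t. indicator {0..1} t *\<^sub>R G1 (cis (2 * pi * t) * z))
        = (\<lambda>t. c * (indicator {0..1} t *\<^sub>R (f (\<delta> * (cis (2 * pi * t) * z)) * cnj (g (cis (2 * pi * t) * z)))))"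
      using True unfolding G1_def c_def by (auto simp: fun_eq_iff)
    have e2: "(\<lambda>t. indicator {0..1} t *\<^sub>R G2 (cis (2 * pi * t) * z))
        = (\<lambda>t. c * (indicator {0..1} t *\<^sub>R (f (cis (2 * pi * t) * z) * cnj (g (cnj \<delta> * (cis (2 * pi * t) * z))))))"
      using True unfolding G2_def c_def by (auto simp: fun_eq_iff)
    have P1: "(\<lambda>n. (a n * \<delta>^n) * cnj (b n) * (z * cnj z)^n) sums
               circ_avg (\<lambda>t. f (\<delta> * (cis (2 * pi * t) * z)) * cnj (g (cis (2 * pi * t) * z)))"
      by (rule circ_parseval[OF sa' sb gc True])
    have P2: "(\<lambda>n. a n * cnj (b n * cnj \<delta>^n) * (z * cnj z)^n) sums
               circ_avg (\<lambda>t. f (cis (2 * pi * t) * z) * cnj (g (cnj \<delta> * (cis (2 * pi * t) * z))))"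
      by (rule circ_parseval[OF sa sb' gc' True])
    have "a n * cnj (b n * cnj \<delta>^n) * (z * cnj z)^n = (a n * \<delta>^n) * cnj (b n) * (z * cnj z)^n" for n
      by (simp only: complex_cnj_mult complex_cnj_power complex_cnj_cnj mult_ac)
    then have "(\<lambda>n. a n * cnj (b n * cnj \<delta>^n) * (z * cnj z)^n) = (\<lambda>n. (a n * \<delta>^n) * cnj (b n) * (z * cnj z)^n)"
      by (rule ext)
    with P2 have P2': "(\<lambda>n. (a n * \<delta>^n) * cnj (b n) * (z * cnj z)^n) sums
               circ_avg (\<lambda>t. f (cis (2 * pi * t) * z) * cnj (g (cnj \<delta> * (cis (2 * pi * t) * z))))"
      by (simp only:)
    have eq: "circ_avg (\<lambda>t. f (\<delta> * (cis (2 * pi * t) * z)) * cnj (g (cis (2 * pi * t) * z)))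
        = circ_avg (\<lambda>t. f (cis (2 * pi * t) * z) * cnj (g (cnj \<delta> * (cis (2 * pi * t) * z))))"
      by (rule sums_unique2[OF P1 P2'])
    show ?thesis unfolding e1 e2 integral_mult_right_zero using eq unfolding circ_avg_alt by simp
  qed
  have "A2_inner \<alpha> (\<lambda>z. f (\<delta> * z)) g = integral\<^sup>L lborel G1" unfolding A2_inner_alt G1_def ..
  also have "\<dots> = (\<integral> z. (\<integral> t. indicator {0..1} t *\<^sub>R G1 (cis (2 * pi * t) * z) \<partial>lborel) \<partial>lborel)"
    by (rule integral_avg[OF i1])
  also have "\<dots> = (\<integral> z. (\<integral> t. indicator {0..1} t *\<^sub>R G2 (cis (2 * pi * t) * z) \<partial>lborel) \<partial>lborel)"
    unfolding inner ..
  also have "\<dots> = integral\<^sup>L lborel G2"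
    by (rule integral_avg[OF i2, symmetric])
  also have "\<dots> = A2_inner \<alpha> f (\<lambda>z. g (cnj \<delta> * z))" unfolding A2_inner_alt G2_def ..
  finally show ?thesis .
qed

lemma poly_A2: "\<alpha> > -1 \<Longrightarrow> (\<lambda>z::complex. z^n) \<in> A2 \<alpha>"
  by (rule bounded_in_A2[where B=1]) (auto simp: norm_power power_le_one holomorphic_intros)

lemma deriv_pow_zero:
  assumes h: "\<psi> holomorphic_on ball 0 1" and z: "\<psi> 0 = 0" and m: "m \<ge> 2"
  shows "deriv (\<lambda>z. \<psi> z ^ m) 0 = 0"
proof -
  have "(\<psi> has_field_derivative deriv \<psi> 0) (at 0)"
    by (rule holomorphic_derivI[OF h]) auto
  then have "((\<lambda>z. \<psi> z ^ m) has_field_derivative of_nat m * (deriv \<psi> 0 * \<psi> 0 ^ (m - Suc 0))) (at 0)"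
    by (rule DERIV_power)
  moreover have "\<psi> 0 ^ (m - Suc 0) = 0" using z m by simp
  ultimately show ?thesis by (simp add: DERIV_imp_deriv)
qed

theorem theorem3p2:
  fixes \<alpha> :: real and \<phi> :: "complex \<Rightarrow> complex"
  assumes "\<alpha> > -1" and "self_map_disc \<phi>"
  shows "(\<exists>\<psi>. self_map_disc \<psi> \<and> comp_adjoint \<alpha> \<phi> \<psi>) \<longleftrightarrow>
         (\<exists>\<delta>::complex. norm \<delta> \<le> 1 \<and> (\<forall>z\<in>ball 0 1. \<phi> z = \<delta> * z))"
proof
  assume "\<exists>\<psi>. self_map_disc \<psi> \<and> comp_adjoint \<alpha> \<phi> \<psi>"
  then obtain \<psi> where sp: "self_map_disc \<psi>" and ca: "comp_adjoint \<alpha> \<phi> \<psi>" by blast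
  have a: "\<alpha> > -1" by (rule assms(1))
  have ph: "\<phi> holomorphic_on ball 0 1" and pb: "\<phi> ` ball 0 1 \<subseteq> ball 0 1"
    using assms(2) by (auto simp: self_map_disc_def)
  have sh: "\<psi> holomorphic_on ball 0 1" and sb: "\<psi> ` ball 0 1 \<subseteq> ball 0 1"
    using sp by (auto simp: self_map_disc_def)
  define co where "co h k = (deriv ^^ k) h 0 / fact k" for h :: "complex \<Rightarrow> complex" and k
  have php: "(\<lambda>z. \<phi> z ^ n) holomorphic_on ball 0 1" for n using ph by (intro holomorphic_intros)
  have psp: "(\<lambda>z. \<psi> z ^ n) holomorphic_on ball 0 1" for n using sh by (intro holomorphic_intros)
  have phb: "norm (\<phi> z ^ n) \<le> 1" if "z \<in> ball 0 1" for z n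
  proof -
    have "\<phi> z \<in> ball 0 1" using pb that by blast
    then have "norm (\<phi> z) \<le> 1" by simp
    then show ?thesis by (simp add: norm_power power_le_one)
  qed
  have psb: "norm (\<psi> z ^ n) \<le> 1" if "z \<in> ball 0 1" for z n
  proof -
    have "\<psi> z \<in> ball 0 1" using sb that by blast
    then have "norm (\<psi> z) \<le> 1" by simp
    then show ?thesis by (simp add: norm_power power_le_one)
  qed
  have key: "co (\<lambda>z. \<phi> z ^ n) m * complex_of_real (cw \<alpha> m) = cnj (co (\<lambda>z. \<psi> z ^ m) n * complex_of_real (cw \<alpha> n))" for n m
  proof -
    have "A2_inner \<alpha> ((\<lambda>z. z^n) \<circ> \<phi>) (\<lambda>z. z^m) = A2_inner \<alpha> (\<lambda>z. z^n) ((\<lambda>z. z^m) \<circ> \<psi>)"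
      using ca poly_A2[OF a] unfolding comp_adjoint_def by blast
    moreover have "A2_inner \<alpha> ((\<lambda>z. z^n) \<circ> \<phi>) (\<lambda>z. z^m) = co (\<lambda>z. \<phi> z ^ n) m * complex_of_real (cw \<alpha> m)"
      unfolding co_def o_def by (rule coef_inner[OF a php phb])
    moreover have "A2_inner \<alpha> (\<lambda>z. z^n) ((\<lambda>z. z^m) \<circ> \<psi>) = cnj (co (\<lambda>z. \<psi> z ^ m) n * complex_of_real (cw \<alpha> n))"
    proof -
      have "A2_inner \<alpha> (\<lambda>z. \<psi> z ^ m) (\<lambda>z. z^n) = co (\<lambda>z. \<psi> z ^ m) n * complex_of_real (cw \<alpha> n)"
        unfolding co_def by (rule coef_inner[OF a psp psb])
      then show ?thesis
        using A2_inner_cnj[of \<alpha> "\<lambda>z. \<psi> z ^ m" "\<lambda>z. z^n"] by (simp add: o_def)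
    qed
    ultimately show ?thesis by simp
  qed
  have cwn: "complex_of_real (cw \<alpha> k) \<noteq> 0" for k using cw_pos[OF a, of k] by simp
  have c1: "co (\<lambda>z. 1) 1 = 0" unfolding co_def by simp
  have "\<psi> 0 = 0"
  proof -
    have "co (\<lambda>z. \<phi> z ^ 0) 1 * complex_of_real (cw \<alpha> 1) = cnj (co (\<lambda>z. \<psi> z ^ 1) 0 * complex_of_real (cw \<alpha> 0))"
      by (rule key)
    then have "cnj (\<psi> 0 * complex_of_real (cw \<alpha> 0)) = 0" using c1 unfolding co_def by simp
    then show ?thesis using cwn[of 0] by simp
  qed
  have "\<phi> 0 = 0"
  proof -
    have "co (\<lambda>z. \<phi> z ^ 1) 0 * complex_of_real (cw \<alpha> 0) = cnj (co (\<lambda>z. \<psi> z ^ 0) 1 * complex_of_real (cw \<alpha> 1))"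
      by (rule key)
    then have "\<phi> 0 * complex_of_real (cw \<alpha> 0) = 0" using c1 unfolding co_def by simp
    then show ?thesis using cwn[of 0] by simp
  qed
  have co0: "co \<phi> m = 0" if "m \<noteq> 1" for m
  proof (cases "m = 0")
    case True then show ?thesis unfolding co_def using \<open>\<phi> 0 = 0\<close> by simp
  next
    case False
    then have m2: "m \<ge> 2" using that by simp
    have "co (\<lambda>z. \<phi> z ^ 1) m * complex_of_real (cw \<alpha> m) = cnj (co (\<lambda>z. \<psi> z ^ m) 1 * complex_of_real (cw \<alpha> 1))"
      by (rule key)
    moreover have "co (\<lambda>z. \<psi> z ^ m) 1 = 0"
      unfolding co_def using deriv_pow_zero[OF sh \<open>\<psi> 0 = 0\<close> m2] by simp
    ultimately have "co \<phi> m * complex_of_real (cw \<alpha> m) = 0" by simp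
    then show ?thesis using cwn[of m] by simp
  qed
  define \<delta> where "\<delta> = co \<phi> 1"
  have lin: "\<phi> z = \<delta> * z" if z: "z \<in> ball 0 1" for z
  proof -
    have "(\<lambda>n. co \<phi> n * z^n) sums \<phi> z" unfolding co_def by (rule holo_sums[OF ph z])
    moreover have "(\<lambda>n. co \<phi> n * z^n) = (\<lambda>n. if n = 1 then \<delta> * z else 0)"
      using co0 unfolding \<delta>_def by (auto simp: fun_eq_iff)
    ultimately have "(\<lambda>n. if n = 1 then \<delta> * z else 0) sums \<phi> z" by simp
    moreover have "(\<lambda>n. if n = 1 then \<delta> * z else 0) sums (\<delta> * z)" by (rule sums_single)
    ultimately show ?thesis using sums_unique2 by blast
  qed
  have "norm \<delta> \<le> 1"
  proof (rule ccontr)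
    assume "\<not> norm \<delta> \<le> 1"
    then have d1: "norm \<delta> > 1" by simp
    then have d0: "\<delta> \<noteq> 0" by auto
    have "norm (1 / \<delta>) < 1" using d1 by (simp add: norm_divide divide_less_eq)
    then have zb: "1 / \<delta> \<in> ball 0 1" by simp
    then have "\<phi> (1 / \<delta>) \<in> ball 0 1" using pb zb by blast
    moreover have "\<phi> (1 / \<delta>) = 1" using lin[OF zb] d0 by simp
    ultimately show False by simp
  qed
  then show "\<exists>\<delta>::complex. norm \<delta> \<le> 1 \<and> (\<forall>z\<in>ball 0 1. \<phi> z = \<delta> * z)" using lin by blast
next
  assume "\<exists>\<delta>::complex. norm \<delta> \<le> 1 \<and> (\<forall>z\<in>ball 0 1. \<phi> z = \<delta> * z)"
  then obtain \<delta> where d: "norm \<delta> \<le> 1" and lin: "\<And>z. z \<in> ball 0 1 \<Longrightarrow> \<phi> z = \<delta> * z" by blast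
  have a: "\<alpha> > -1" by (rule assms(1))
  define \<psi> where "\<psi> = (\<lambda>z. cnj \<delta> * z)"
  have "self_map_disc \<psi>"
    unfolding self_map_disc_def \<psi>_def
  proof (intro conjI)
    show "(\<lambda>z. cnj \<delta> * z) holomorphic_on ball 0 1" by (intro holomorphic_intros)
    show "(\<lambda>z. cnj \<delta> * z) ` ball 0 1 \<subseteq> ball 0 1"
    proof
      fix w assume "w \<in> (\<lambda>z. cnj \<delta> * z) ` ball 0 1"
      then obtain z where z: "z \<in> ball 0 1" "w = cnj \<delta> * z" by auto
      have "norm w \<le> norm z" using d z(2) by (simp add: norm_mult mult_left_le_one_le)
      then show "w \<in> ball 0 1" using z(1) by simp
    qed
  qed
  moreover have "comp_adjoint \<alpha> \<phi> \<psi>"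
    unfolding comp_adjoint_def
  proof (intro ballI)
    fix f g assume f: "f \<in> A2 \<alpha>" and g: "g \<in> A2 \<alpha>"
    have "A2_inner \<alpha> (f \<circ> \<phi>) g = A2_inner \<alpha> (\<lambda>z. f (\<delta> * z)) g"
      unfolding A2_inner_def by (rule set_lebesgue_integral_cong) (auto simp: lin)
    also have "\<dots> = A2_inner \<alpha> f (\<lambda>z. g (cnj \<delta> * z))" by (rule inner_dilate[OF a f g d])
    also have "\<dots> = A2_inner \<alpha> f (g \<circ> \<psi>)" unfolding \<psi>_def o_def ..
    finally show "A2_inner \<alpha> (f \<circ> \<phi>) g = A2_inner \<alpha> f (g \<circ> \<psi>)" .
  qed
  ultimately show "\<exists>\<psi>. self_map_disc \<psi> \<and> comp_adjoint \<alpha> \<phi> \<psi>" by blast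
qed

end
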